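(* Let $n\ge3$. Consider the action on complex symmetric $n\times n$ matrices $H$ given by $H\mapsto a\bar d\,BHB^\tau$, where $B=\begin{pmatrix}V&c\\0&d\end{pmatrix}$ with $c\in\mathbb{C}^{n-1}$, $d\in\mathbb{C}\setminus\{0\}$, $a>0$ and $\sqrt a\,V\in U(\mathbb{C}^{n-1})$ (these are exactly the changes of bases preserving the normalized Levi form $\tilde I=\operatorname{diag}(1,\dots,1,0)$, acting on the matrix $H=(h_{\bar\alpha\bar\beta n})$ of the third order tensor of a hypersurface at a point where the Levi form has rank $n-1$ and is semidefinite). Then every symmetric $H$ can be brought by this action to precisely one of the following block matrices: (i) $\begin{pmatrix}D_{n-1}(\lambda)&e_{n-1}\\ e_{n-1}^\tau&0\end{pmatrix}$ with $\lambda=(1,\lambda_2,\dots,\lambda_{n-2},0)$, $1\ge\lambda_2\ge\dots\ge\lambda_{n-2}\ge0$, or $\lambda=0$; (ii) $\begin{pmatrix}D_{n-1}(\lambda)&0\\0&0\end{pmatrix}$ with $\lambda=(1,\lambda_2,\dots,\lambda_{n-1})$, $1\ge\lambda_2\ge\dots\ge\lambda_{n-1}\ge0$, or $\lambda=0$; (iii) $\begin{pmatrix}D_{n-1}(\lambda)&0\\0&1\end{pmatrix}$ with $\lambda=(1,\lambda_2,\dots,\lambda_{n-1})$, $1\ge\lambda_2\ge\dots\ge\lambda_{n-1}\ge0$, or $\lambda=0$; with the form and $\lambda$ uniquely determined. For $n=2$ the same holds with: in (i) only $\lambda=0$; in (ii) and (iii) $\lambda\in\{0,1\}$.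
   Context: $D_{n-1}(\lambda)$ is the diagonal $(n-1)\times(n-1)$ matrix with diagonal $\lambda$; $e_{n-1}=(0,\dots,0,1)^\tau\in\mathbb{C}^{n-1}$ (for $n=2$, $e_1=1$); $U(\mathbb{C}^{n-1})$ is the unitary group. *)

theory Defs
  imports Complex_Main "Jordan_Normal_Form.Matrix"
begin

text \<open>Matrices are JNF matrices, indices 0-based; the last index is n-1.\<close>

definition conj_transpose :: "complex mat \<Rightarrow> complex mat" where
  "conj_transpose U = mat (dim_col U) (dim_row U) (\<lambda>(i,j). cnj (U $$ (j,i)))"

definition unitary_mat :: "nat \<Rightarrow> complex mat \<Rightarrow> bool" where
  "unitary_mat m U \<longleftrightarrow> U \<in> carrier_mat m m \<and> U * conj_transpose U = 1\<^sub>m m"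

definition block_B :: "nat \<Rightarrow> complex mat \<Rightarrow> complex vec \<Rightarrow> complex \<Rightarrow> complex mat" where
  "block_B n V c d = mat n n (\<lambda>(i,j).
     if i < n - 1 \<and> j < n - 1 then V $$ (i,j)
     else if i < n - 1 \<and> j = n - 1 then c $ i
     else if i = n - 1 \<and> j = n - 1 then d
     else 0)"

definition admissible_params :: "nat \<Rightarrow> real \<Rightarrow> complex mat \<Rightarrow> complex vec \<Rightarrow> complex \<Rightarrow> bool" where
  "admissible_params n a V c d \<longleftrightarrow>
     a > 0 \<and> d \<noteq> 0 \<and> V \<in> carrier_mat (n - 1) (n - 1) \<and> c \<in> carrier_vec (n - 1) \<and>
     unitary_mat (n - 1) (complex_of_real (sqrt a) \<cdot>\<^sub>m V)"

definition act :: "nat \<Rightarrow> real \<Rightarrow> complex mat \<Rightarrow> complex vec \<Rightarrow> complex \<Rightarrow> complex mat \<Rightarrow> complex mat" where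
  "act n a V c d H = (complex_of_real a * cnj d) \<cdot>\<^sub>m
      (block_B n V c d * H * transpose_mat (block_B n V c d))"

text \<open>Form 1: off-diagonal e_{n-1} block (entries (n-2,n-1) and (n-1,n-2) equal 1), corner 0;
  form 2: corner 0; form 3: corner 1.\<close>
definition normal_form :: "nat \<Rightarrow> nat \<Rightarrow> real list \<Rightarrow> complex mat" where
  "normal_form n k lam = mat n n (\<lambda>(i,j).
     if i < n - 1 \<and> j < n - 1 then (if i = j then complex_of_real (lam ! i) else 0)
     else if k = 1 \<and> ((i = n - 2 \<and> j = n - 1) \<or> (i = n - 1 \<and> j = n - 2)) then 1
     else if k = 3 \<and> i = n - 1 \<and> j = n - 1 then 1
     else 0)"

definition admissible_lambda :: "nat \<Rightarrow> nat \<Rightarrow> real list \<Rightarrow> bool" where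
  "admissible_lambda n k lam \<longleftrightarrow> length lam = n - 1 \<and>
     ((\<forall>i < n - 1. lam ! i = 0) \<or>
      (lam ! 0 = 1 \<and> (\<forall>i j. i \<le> j \<longrightarrow> j < n - 1 \<longrightarrow> lam ! j \<le> lam ! i) \<and>
       (\<forall>i < n - 1. 0 \<le> lam ! i) \<and> (k = 1 \<longrightarrow> lam ! (n - 2) = 0)))"

end

theory Submission
  imports Defs "Jordan_Normal_Form.Spectral_Radius" "HOL-Combinatorics.Permutations"
begin

lemma ct_dims[simp]: "dim_row (conj_transpose A) = dim_col A" "dim_col (conj_transpose A) = dim_row A"
  by (auto simp: conj_transpose_def)

lemma ct_carrier[simp]: "conj_transpose A \<in> carrier_mat (dim_col A) (dim_row A)"
  by (auto simp: conj_transpose_def)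

lemma ct_index[simp]: "i < dim_col A \<Longrightarrow> j < dim_row A \<Longrightarrow> conj_transpose A $$ (i,j) = cnj (A $$ (j,i))"
  by (auto simp: conj_transpose_def)

lemma mult_index2: assumes "A \<in> carrier_mat n k" "B \<in> carrier_mat k p" "i < n" "j < p"
  shows "(A * B) $$ (i,j) = (\<Sum>l<k. A $$ (i,l) * B $$ (l,j))"
  using assms by (simp add: scalar_prod_def atLeast0LessThan)

lemma tri: assumes "A \<in> carrier_mat n n" "M \<in> carrier_mat n n" "B \<in> carrier_mat n n" "i < n" "j < n"
  shows "(A * M * transpose_mat B) $$ (i,j) = (\<Sum>k<n. \<Sum>l<n. A$$(i,k) * M$$(k,l) * B$$(j,l))"
proof -
  have "(A * M * transpose_mat B) $$ (i,j) = (\<Sum>k<n. A$$(i,k) * (\<Sum>l<n. M$$(k,l) * B$$(j,l)))"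
    using assms by (simp add: scalar_prod_def atLeast0LessThan)
  also have "\<dots> = (\<Sum>k<n. \<Sum>l<n. A$$(i,k) * M$$(k,l) * B$$(j,l))" by (simp add: sum_distrib_left ac_simps)
  finally show ?thesis .
qed

lemma unitary_iff: "unitary_mat m U \<longleftrightarrow> U \<in> carrier_mat m m \<and>
   (\<forall>i<m. \<forall>j<m. (\<Sum>k<m. U$$(i,k) * cnj (U$$(j,k))) = (if i = j then 1 else 0))"
proof
  assume u: "unitary_mat m U"
  hence U: "U \<in> carrier_mat m m" and e: "U * conj_transpose U = 1\<^sub>m m" by (auto simp: unitary_mat_def)
  show "U \<in> carrier_mat m m \<and> (\<forall>i<m. \<forall>j<m. (\<Sum>k<m. U$$(i,k) * cnj (U$$(j,k))) = (if i = j then 1 else 0))"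
  proof (intro conjI allI impI U)
    fix i j assume ij: "i < m" "j < m"
    have "(U * conj_transpose U) $$ (i,j) = (\<Sum>k<m. U$$(i,k) * cnj (U$$(j,k)))"
      using U ij by (subst mult_index2[of _ m m _ m]) auto
    then show "(\<Sum>k<m. U$$(i,k) * cnj (U$$(j,k))) = (if i = j then 1 else 0)" using e ij by simp
  qed
next
  assume h: "U \<in> carrier_mat m m \<and> (\<forall>i<m. \<forall>j<m. (\<Sum>k<m. U$$(i,k) * cnj (U$$(j,k))) = (if i = j then 1 else 0))"
  hence U: "U \<in> carrier_mat m m" by auto
  have "U * conj_transpose U = 1\<^sub>m m"
  proof (rule eq_matI)
    fix i j assume ij: "i < dim_row (1\<^sub>m m)" "j < dim_col (1\<^sub>m m)"
    have "(U * conj_transpose U) $$ (i,j) = (\<Sum>k<m. U$$(i,k) * cnj (U$$(j,k)))"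
      using U ij by (subst mult_index2[of _ m m _ m]) auto
    then show "(U * conj_transpose U) $$ (i,j) = 1\<^sub>m m $$ (i,j)" using h ij by simp
  qed (use U in auto)
  then show "unitary_mat m U" using U by (simp add: unitary_mat_def)
qed

lemma unitary_carrier: "unitary_mat m U \<Longrightarrow> U \<in> carrier_mat m m"
  by (simp add: unitary_mat_def)

lemma unitary_rows: "unitary_mat m U \<Longrightarrow> i < m \<Longrightarrow> j < m \<Longrightarrow>
   (\<Sum>k<m. U$$(i,k) * cnj (U$$(j,k))) = (if i = j then 1 else 0)"
  by (simp add: unitary_iff)

lemma unitary_cols: assumes "unitary_mat m U" "i < m" "j < m"
  shows "(\<Sum>k<m. cnj (U$$(k,i)) * U$$(k,j)) = (if i = j then 1 else 0)"
proof -
  have U: "U \<in> carrier_mat m m" and e: "U * conj_transpose U = 1\<^sub>m m" using assms by (auto simp: unitary_mat_def)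
  have e2: "conj_transpose U * U = 1\<^sub>m m"
    by (rule mat_mult_left_right_inverse[OF U _ e]) (use U in auto)
  have "(conj_transpose U * U) $$ (i,j) = (\<Sum>k<m. cnj (U$$(k,i)) * U$$(k,j))"
    using U assms by (subst mult_index2[of _ m m _ m]) auto
  then show ?thesis using e2 assms by simp
qed

lemma ct_mult: assumes "A \<in> carrier_mat n k" "B \<in> carrier_mat k p"
  shows "conj_transpose (A * B) = conj_transpose B * conj_transpose A"
proof (rule eq_matI)
  fix i j assume ij: "i < dim_row (conj_transpose B * conj_transpose A)" "j < dim_col (conj_transpose B * conj_transpose A)"
  hence ij': "i < p" "j < n" using assms by auto
  have "conj_transpose (A * B) $$ (i,j) = cnj (\<Sum>l<k. A $$ (j,l) * B $$ (l,i))"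
    using assms ij' by (simp add: scalar_prod_def atLeast0LessThan)
  also have "\<dots> = (\<Sum>l<k. cnj (B $$ (l,i)) * cnj (A $$ (j,l)))" by (simp add: mult.commute)
  also have "\<dots> = (conj_transpose B * conj_transpose A) $$ (i,j)"
    using assms ij' by (subst mult_index2[of _ p k _ n]) auto
  finally show "conj_transpose (A * B) $$ (i,j) = (conj_transpose B * conj_transpose A) $$ (i,j)" .
qed (use assms in auto)

lemma unitary_mult: assumes "unitary_mat m U" "unitary_mat m W" shows "unitary_mat m (U * W)"
proof -
  have U: "U \<in> carrier_mat m m" and eU: "U * conj_transpose U = 1\<^sub>m m" using assms by (auto simp: unitary_mat_def)
  have W: "W \<in> carrier_mat m m" and eW: "W * conj_transpose W = 1\<^sub>m m" using assms by (auto simp: unitary_mat_def)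
  have cU: "conj_transpose U \<in> carrier_mat m m" and cW: "conj_transpose W \<in> carrier_mat m m" using U W by auto
  have "U * W * conj_transpose (U * W) = U * (W * conj_transpose W) * conj_transpose U"
    using U W cU cW by (simp add: ct_mult[OF U W] assoc_mult_mat[of _ m m _ m _ m])
  also have "\<dots> = 1\<^sub>m m" using eW eU U by simp
  finally show ?thesis using U W by (simp add: unitary_mat_def)
qed

lemma unitary_one: "unitary_mat m (1\<^sub>m m)"
  by (auto simp: unitary_mat_def intro!: eq_matI)

lemma cnj_unit: "cmod z = 1 \<Longrightarrow> z * cnj z = 1"
  by (metis complex_norm_square mult.commute of_real_1 power_one)

lemma unitary_smult: assumes "unitary_mat m U" "cmod z = 1" shows "unitary_mat m (z \<cdot>\<^sub>m U)"
proof -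
  have U: "U \<in> carrier_mat m m" using assms by (simp add: unitary_mat_def)
  have z: "z * cnj z = 1" using cnj_unit[OF assms(2)] .
  show ?thesis unfolding unitary_iff
  proof (intro conjI allI impI)
    fix i j assume ij: "i < m" "j < m"
    have "(\<Sum>k<m. (z \<cdot>\<^sub>m U)$$(i,k) * cnj ((z \<cdot>\<^sub>m U)$$(j,k))) = (z * cnj z) * (\<Sum>k<m. U$$(i,k) * cnj (U$$(j,k)))"
      using U ij by (simp add: sum_distrib_left ac_simps)
    then show "(\<Sum>k<m. (z \<cdot>\<^sub>m U)$$(i,k) * cnj ((z \<cdot>\<^sub>m U)$$(j,k))) = (if i = j then 1 else 0)"
      using z unitary_rows[OF assms(1) ij] by simp
  qed (use U in auto)
qed

section \<open>Unitary completion (Householder)\<close>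

lemma phase_exists: "\<exists>\<phi>. cmod \<phi> = 1 \<and> cnj \<phi> * z = of_real (cmod z)"
proof (cases "z = 0")
  case True then show ?thesis by (intro exI[of _ 1]) auto
next
  case False
  define \<phi> where "\<phi> = z / of_real (cmod z)"
  have "cmod \<phi> = 1" using False by (simp add: \<phi>_def norm_divide)
  moreover have "cnj \<phi> * z = of_real (cmod z)"
  proof -
    have "cnj \<phi> * z = (z * cnj z) / of_real (cmod z)" by (simp add: \<phi>_def)
    also have "\<dots> = of_real (cmod z ^ 2) / of_real (cmod z)" by (metis complex_norm_square)
    also have "\<dots> = of_real (cmod z)" using False by (simp add: power2_eq_square)
    finally show ?thesis .
  qed
  ultimately show ?thesis by blast
qed

lemma sum_delta_l: "i < (m::nat) \<Longrightarrow> (\<Sum>k<m. (if i = k then 1 else 0) * f k) = (f i :: complex)"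
  by (simp add: if_distrib[of "\<lambda>x. x * _"] cong: if_cong)

lemma cnj_delta[simp]: "cnj (if P then 1 else 0) = (if P then 1 else 0)" by simp

lemma sum_delta_r: "i < (m::nat) \<Longrightarrow> (\<Sum>k<m. f k * (if i = k then 1 else 0)) = (f i :: complex)"
  by (simp add: if_distrib[of "\<lambda>x. _ * x"] cong: if_cong)

lemma unit_completion:
  assumes m: "0 < m" and x: "(\<Sum>k<m. x k * cnj (x k)) = 1"
  shows "\<exists>P. unitary_mat m P \<and> (\<forall>i<m. P $$ (i, m - 1) = x i)"
proof -
  define l where "l = m - 1"
  have l: "l < m" using m by (simp add: l_def)
  obtain \<phi> where ph: "cmod \<phi> = 1" and phx: "cnj \<phi> * x l = of_real (cmod (x l))"
    using phase_exists by blast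
  have phc: "\<phi> * cnj \<phi> = 1" using cnj_unit[OF ph] .
  define y where "y i = cnj \<phi> * x i" for i
  define r where "r = cmod (x l)"
  have yl: "y l = of_real r" using phx by (simp add: y_def r_def)
  have r0: "r \<ge> 0" by (simp add: r_def)
  have ynorm: "(\<Sum>k<m. y k * cnj (y k)) = 1"
  proof -
    have "(\<Sum>k<m. y k * cnj (y k)) = (\<phi> * cnj \<phi>) * (\<Sum>k<m. x k * cnj (x k))"
      by (simp add: y_def sum_distrib_left ac_simps)
    then show ?thesis using phc x by simp
  qed
  define w where "w i = y i + (if i = l then 1 else 0)" for i
  define N where "N = (\<Sum>k<m. w k * cnj (w k))"
  have N: "N = of_real (2 + 2 * r)"
  proof -
    have "N = (\<Sum>k<m. y k * cnj (y k) + (if k = l then cnj (y l) + y l + 1 else 0))"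
      unfolding N_def w_def by (intro sum.cong) (auto simp: algebra_simps)
    also have "\<dots> = 1 + (cnj (y l) + y l + 1)"
      using l ynorm by (simp add: sum.distrib sum.delta)
    finally show ?thesis using yl by simp
  qed
  have Nnz: "N \<noteq> 0" using N r0
    by (metis add_pos_nonneg mult_nonneg_nonneg of_real_eq_0_iff zero_less_numeral less_numeral_extra(3) zero_le_numeral)
  define c where "c = 2 / N"
  have cc: "cnj c = c" by (simp add: c_def N)
  have cN: "c * N = 2" using Nnz by (simp add: c_def)
  define P where "P = mat m m (\<lambda>(i,j). - \<phi> * ((if i = j then 1 else 0) - c * w i * cnj (w j)))"
  have Pc: "P \<in> carrier_mat m m" by (simp add: P_def)
  have "unitary_mat m P" unfolding unitary_iff
  proof (intro conjI allI impI Pc)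
    fix i j assume ij: "i < m" "j < m"
    have "(\<Sum>k<m. P$$(i,k) * cnj (P$$(j,k))) = (\<phi> * cnj \<phi>) *
       (\<Sum>k<m. ((if i = k then 1 else 0) - c * w i * cnj (w k)) * ((if j = k then 1 else 0) - c * cnj (w j) * w k))"
      using ij cc by (simp add: P_def sum_distrib_left ac_simps)
    also have "\<dots> = (\<Sum>k<m. ((if i = k then 1 else 0) - c * w i * cnj (w k)) * ((if j = k then 1 else 0) - c * cnj (w j) * w k))"
      using phc by simp
    also have "\<dots> = (\<Sum>k<m. (if i = k then 1 else 0) * (if j = k then 1 else 0)
       - (if i = k then 1 else 0) * (c * cnj (w j) * w k) - (if j = k then 1 else 0) * (c * w i * cnj (w k))
       + (c * c * w i * cnj (w j)) * (w k * cnj (w k)))"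
      by (intro sum.cong) (auto simp: algebra_simps)
    also have "\<dots> = (if i = j then 1 else 0) - c * cnj (w j) * w i - c * w i * cnj (w j) + (c * c * w i * cnj (w j)) * N"
    proof -
      have e1: "(\<Sum>k<m. (if i = k then 1 else 0) * (if j = k then 1 else (0::complex))) = (if i = j then 1 else 0)"
        using sum_delta_l[OF ij(1), of "\<lambda>k. if j = k then 1 else 0"] by auto
      have e2: "(\<Sum>k<m. (if i = k then 1 else 0) * (c * cnj (w j) * w k)) = c * cnj (w j) * w i"
        by (rule sum_delta_l[OF ij(1)])
      have e3: "(\<Sum>k<m. (if j = k then 1 else 0) * (c * w i * cnj (w k))) = c * w i * cnj (w j)"
        by (rule sum_delta_l[OF ij(2)])
      have e4: "(\<Sum>k<m. (c * c * w i * cnj (w j)) * (w k * cnj (w k))) = (c * c * w i * cnj (w j)) * N"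
        by (simp add: N_def sum_distrib_left)
      show ?thesis by (simp only: sum.distrib sum_subtractf e1 e2 e3 e4)
    qed
    also have "\<dots> = (if i = j then 1 else 0)"
      using cN by (simp add: algebra_simps)
    finally show "(\<Sum>k<m. P$$(i,k) * cnj (P$$(j,k))) = (if i = j then 1 else 0)" .
  qed
  moreover have "\<forall>i<m. P $$ (i, m - 1) = x i"
  proof (intro allI impI)
    fix i assume i: "i < m"
    have cw: "cnj (w l) = of_real (r + 1)" using yl by (simp add: w_def)
    have "P $$ (i, m - 1) = P $$ (i, l)" by (simp add: l_def)
    also have "\<dots> = - \<phi> * ((if i = l then 1 else 0) - c * w i * cnj (w l))"
      using i l by (simp add: P_def)
    also have "\<dots> = - \<phi> * ((if i = l then 1 else 0) - c * w i * of_real (r + 1))"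
      using cw by simp
    also have "c * of_real (r + 1) = 1" using Nnz by (simp add: c_def N field_simps)
    hence "c * w i * of_real (r + 1) = w i" by (metis mult.commute mult.left_commute mult_1_right)
    hence "- \<phi> * ((if i = l then 1 else 0) - c * w i * of_real (r + 1)) = \<phi> * y i"
      by (simp add: w_def algebra_simps)
    also have "\<phi> * y i = x i" using phc by (simp add: y_def mult.assoc[symmetric])
    finally show "P $$ (i, m - 1) = x i" .
  qed
  ultimately show ?thesis by blast
qed

lemma sum_cnj_self: "(\<Sum>k<(m::nat). w k * cnj (w k)) = of_real (\<Sum>k<m. (cmod (w k))^2)"
  unfolding of_real_sum by (intro sum.cong refl) (metis complex_norm_square)

lemma sum_sq_pos: assumes "k0 < (m::nat)" "w k0 \<noteq> 0" shows "(\<Sum>k<m. (cmod (w k))^2) > 0"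
proof -
  have "(\<Sum>k<m. (cmod (w k))^2) \<ge> (cmod (w k0))^2"
    using assms by (intro member_le_sum) auto
  moreover have "(cmod (w k0))^2 > 0" using assms by simp
  ultimately show ?thesis by linarith
qed

lemma normalize_eig:
  assumes k0: "k0 < (m::nat)" "w k0 \<noteq> 0"
    and e: "\<forall>i<m. (\<Sum>k<m. A$$(i,k) * cnj (w k)) = of_real \<sigma> * w i"
  shows "\<exists>x. (\<Sum>k<m. x k * cnj (x k)) = 1 \<and> (\<forall>i<m. (\<Sum>k<m. A$$(i,k) * cnj (x k)) = of_real \<sigma> * x i)"
proof -
  define s where "s = (\<Sum>k<m. (cmod (w k))^2)"
  have s: "s > 0" using sum_sq_pos[of k0 m w, OF k0] by (simp add: s_def)
  define \<rho> where "\<rho> = sqrt s"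
  have r: "\<rho> > 0" using s by (simp add: \<rho>_def)
  define x where "x k = w k / of_real \<rho>" for k
  have "(\<Sum>k<m. x k * cnj (x k)) = (\<Sum>k<m. w k * cnj (w k)) / of_real (\<rho>^2)"
    by (simp add: x_def sum_divide_distrib power2_eq_square)
  also have "\<dots> = 1" using s by (simp add: sum_cnj_self s_def[symmetric] \<rho>_def)
  finally have 1: "(\<Sum>k<m. x k * cnj (x k)) = 1" .
  have "\<forall>i<m. (\<Sum>k<m. A$$(i,k) * cnj (x k)) = of_real \<sigma> * x i"
  proof (intro allI impI)
    fix i assume i: "i < m"
    have "(\<Sum>k<m. A$$(i,k) * cnj (x k)) = (\<Sum>k<m. A$$(i,k) * cnj (w k)) / of_real \<rho>"
      by (simp add: x_def sum_divide_distrib)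
    also have "\<dots> = of_real \<sigma> * x i" using e i by (simp add: x_def)
    finally show "(\<Sum>k<m. A$$(i,k) * cnj (x k)) = of_real \<sigma> * x i" .
  qed
  with 1 show ?thesis by blast
qed

lemma eigen_step:
  assumes A: "A \<in> carrier_mat m m" and m: "0 < m" and sym: "\<forall>i<m. \<forall>j<m. A$$(i,j) = A$$(j,i)"
  shows "\<exists>x \<sigma>. \<sigma> \<ge> 0 \<and> (\<Sum>k<m. x k * cnj (x k)) = 1 \<and>
     (\<forall>i<m. (\<Sum>k<m. A$$(i,k) * cnj (x k)) = of_real \<sigma> * x i)"
proof -
  define C where "C = A * map_mat cnj A"
  have C: "C \<in> carrier_mat m m" using A by (simp add: C_def)
  obtain \<mu> where "\<mu> \<in> spectrum C" using spectrum_non_empty[OF C m] by blast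
  then obtain v where ev: "eigenvector C v \<mu>" by (auto simp: spectrum_def eigenvalue_def)
  have v: "v \<in> carrier_vec m" and v0: "v \<noteq> 0\<^sub>v m" and Cv: "C *\<^sub>v v = \<mu> \<cdot>\<^sub>v v"
    using ev C by (auto simp: eigenvector_def)
  define vf where "vf k = v $ k" for k
  obtain k0 where k0: "k0 < m" "vf k0 \<noteq> 0" using v v0 unfolding vf_def by (metis eq_vecI carrier_vecD index_zero_vec)
  define y where "y l = (\<Sum>k<m. cnj (A$$(l,k)) * vf k)" for l
  have E1: "(\<Sum>l<m. A$$(i,l) * y l) = \<mu> * vf i" if i: "i < m" for i
  proof -
    have "(C *\<^sub>v v) $ i = (\<Sum>l<m. A$$(i,l) * y l)"
      using i A v C unfolding C_def
      by (simp add: scalar_prod_def atLeast0LessThan vf_def y_def)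
    then show ?thesis using Cv i v by (simp add: vf_def)
  qed
  define Nv where "Nv = (\<Sum>k<m. (cmod (vf k))^2)"
  define Ny where "Ny = (\<Sum>k<m. (cmod (y k))^2)"
  have Nv: "Nv > 0" using sum_sq_pos[of k0 m vf, OF k0] by (simp add: Nv_def)
  have "\<mu> * of_real Nv = \<mu> * (\<Sum>k<m. vf k * cnj (vf k))"
    by (simp only: Nv_def sum_cnj_self)
  also have "\<dots> = (\<Sum>i<m. cnj (vf i) * (\<mu> * vf i))"
    by (simp add: sum_distrib_left ac_simps)
  also have "\<dots> = (\<Sum>i<m. cnj (vf i) * (\<Sum>l<m. A$$(i,l) * y l))"
    using E1 by simp
  also have "\<dots> = (\<Sum>i<m. \<Sum>l<m. y l * (A$$(l,i) * cnj (vf i)))"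
    using sym by (intro sum.cong refl) (simp add: sum_distrib_left ac_simps)
  also have "\<dots> = (\<Sum>l<m. \<Sum>i<m. y l * (A$$(l,i) * cnj (vf i)))"
    by (rule sum.swap)
  also have "\<dots> = (\<Sum>l<m. y l * (\<Sum>i<m. A$$(l,i) * cnj (vf i)))"
    by (simp add: sum_distrib_left)
  also have "\<dots> = (\<Sum>l<m. y l * cnj (y l))"
    by (simp add: y_def)
  also have "\<dots> = of_real Ny" by (simp add: Ny_def sum_cnj_self)
  finally have muN: "\<mu> * of_real Nv = of_real Ny" .
  define t where "t = Ny / Nv"
  have t0: "t \<ge> 0" using Nv by (simp add: t_def Ny_def sum_nonneg)
  have mu: "\<mu> = of_real t" using muN Nv by (simp add: t_def field_simps)
  define \<sigma> where "\<sigma> = sqrt t"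
  have s0: "\<sigma> \<ge> 0" using t0 by (simp add: \<sigma>_def)
  have ss: "of_real \<sigma> * of_real \<sigma> = \<mu>" using t0 mu by (simp add: \<sigma>_def flip: of_real_mult)
  define z where "z i = (\<Sum>k<m. A$$(i,k) * cnj (vf k)) + of_real \<sigma> * vf i" for i
  have Ez: "(\<Sum>k<m. A$$(i,k) * cnj (z k)) = of_real \<sigma> * z i" if i: "i < m" for i
  proof -
    have "(\<Sum>k<m. A$$(i,k) * cnj (z k)) = (\<Sum>k<m. A$$(i,k) * y k) + of_real \<sigma> * (\<Sum>k<m. A$$(i,k) * cnj (vf k))"
    proof -
      have "cnj (z k) = y k + of_real \<sigma> * cnj (vf k)" if "k < m" for k
        using sym that by (simp add: z_def y_def)
      then show ?thesis by (simp add: sum.distrib sum_distrib_left algebra_simps)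
    qed
    also have "\<dots> = of_real \<sigma> * z i" using E1[OF i] ss by (simp add: z_def algebra_simps)
    finally show ?thesis .
  qed
  show ?thesis
  proof (cases "\<exists>k<m. z k \<noteq> 0")
    case True
    then obtain k1 where "k1 < m" "z k1 \<noteq> 0" by blast
    from normalize_eig[of k1 m z A \<sigma>, OF this] Ez s0 show ?thesis by blast
  next
    case False
    define w where "w k = \<i> * vf k" for k
    have "w k0 \<noteq> 0" using k0 by (simp add: w_def)
    moreover have "\<forall>i<m. (\<Sum>k<m. A$$(i,k) * cnj (w k)) = of_real \<sigma> * w i"
    proof (intro allI impI)
      fix i assume i: "i < m"
      have zi: "(\<Sum>k<m. A$$(i,k) * cnj (vf k)) = - of_real \<sigma> * vf i"
        using False i by (simp add: z_def eq_neg_iff_add_eq_0)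
      have "(\<Sum>k<m. A$$(i,k) * cnj (w k)) = - \<i> * (\<Sum>k<m. A$$(i,k) * cnj (vf k))"
        by (simp add: w_def sum_distrib_left ac_simps)
      also have "\<dots> = of_real \<sigma> * w i" using zi by (simp add: w_def)
      finally show "(\<Sum>k<m. A$$(i,k) * cnj (w k)) = of_real \<sigma> * w i" .
    qed
    ultimately show ?thesis using normalize_eig[of k0 m w A \<sigma>, OF k0(1)] s0 by blast
  qed
qed

definition ext :: "nat \<Rightarrow> complex mat \<Rightarrow> complex mat" where
  "ext m U = mat (Suc m) (Suc m) (\<lambda>(i,j). if i < m \<and> j < m then U $$ (i,j) else if i = j then 1 else 0)"

definition tlm :: "nat \<Rightarrow> complex mat \<Rightarrow> complex mat" where
  "tlm m B = mat m m (\<lambda>(i,j). B $$ (i,j))"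

definition dg :: "nat \<Rightarrow> (nat \<Rightarrow> real) \<Rightarrow> complex mat" where
  "dg m s = mat m m (\<lambda>(i,j). if i = j then complex_of_real (s i) else 0)"

lemma ext_carrier[simp]: "ext m U \<in> carrier_mat (Suc m) (Suc m)" by (simp add: ext_def)
lemma tlm_carrier[simp]: "tlm m U \<in> carrier_mat m m" by (simp add: tlm_def)
lemma dg_carrier[simp]: "dg m s \<in> carrier_mat m m" by (simp add: dg_def)
lemma ext_in[simp]: "i < m \<Longrightarrow> k < m \<Longrightarrow> ext m U $$ (i,k) = U$$(i,k)" by (simp add: ext_def)
lemma ext_lastc[simp]: "i < Suc m \<Longrightarrow> ext m U $$ (i,m) = (if i = m then 1 else 0)" by (simp add: ext_def)
lemma ext_lastr[simp]: "k < Suc m \<Longrightarrow> ext m U $$ (m,k) = (if k = m then 1 else 0)" by (simp add: ext_def)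
lemma tlm_index[simp]: "i < m \<Longrightarrow> j < m \<Longrightarrow> tlm m B $$ (i,j) = B$$(i,j)" by (simp add: tlm_def)
lemma dg_index[simp]: "i < m \<Longrightarrow> j < m \<Longrightarrow> dg m s $$ (i,j) = (if i = j then complex_of_real (s i) else 0)"
  by (simp add: dg_def)

lemma sum2_Suc: "(\<Sum>k<Suc m. \<Sum>l<Suc m. f k l) =
   (\<Sum>k<m. \<Sum>l<m. f k l) + (\<Sum>k<m. f k m) + (\<Sum>l<m. f m l) + (f m m :: complex)"
  by (simp add: sum.distrib)

lemma ext_tri:
  assumes U: "U \<in> carrier_mat m m" and B: "B \<in> carrier_mat (Suc m) (Suc m)" and ij: "i < Suc m" "j < Suc m"
  shows "(ext m U * B * transpose_mat (ext m U)) $$ (i,j) =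
    (if i < m \<and> j < m then (U * tlm m B * transpose_mat U) $$ (i,j)
     else if i < m then (\<Sum>k<m. U$$(i,k) * B$$(k,m))
     else if j < m then (\<Sum>l<m. B$$(m,l) * U$$(j,l))
     else B$$(m,m))"
proof -
  have "(ext m U * B * transpose_mat (ext m U)) $$ (i,j) =
     (\<Sum>k<Suc m. \<Sum>l<Suc m. ext m U$$(i,k) * B$$(k,l) * ext m U$$(j,l))"
    using B ij by (intro tri) auto
  also have "\<dots> = (\<Sum>k<m. \<Sum>l<m. ext m U$$(i,k) * B$$(k,l) * ext m U$$(j,l))
     + (\<Sum>k<m. ext m U$$(i,k) * B$$(k,m) * ext m U$$(j,m))
     + (\<Sum>l<m. ext m U$$(i,m) * B$$(m,l) * ext m U$$(j,l))
     + ext m U$$(i,m) * B$$(m,m) * ext m U$$(j,m)" by (rule sum2_Suc)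
  finally have e: "(ext m U * B * transpose_mat (ext m U)) $$ (i,j) = \<dots>" .
  show ?thesis
  proof (cases "i < m")
    case i: True
    show ?thesis
    proof (cases "j < m")
      case j: True
      have "(U * tlm m B * transpose_mat U) $$ (i,j) = (\<Sum>k<m. \<Sum>l<m. U$$(i,k) * tlm m B$$(k,l) * U$$(j,l))"
        using U i j by (intro tri) auto
      then show ?thesis using e i j by simp
    next
      case j: False
      then have jm: "j = m" using ij by simp
      show ?thesis using e i jm by simp
    qed
  next
    case i: False
    then have im: "i = m" using ij by simp
    show ?thesis
    proof (cases "j < m")
      case j: True
      show ?thesis using e im j by simp
    next
      case j: False
      then have jm: "j = m" using ij by simp
      show ?thesis using e im jm by simp
    qed
  qed
qed

lemma unitary_ext: assumes "unitary_mat m U" shows "unitary_mat (Suc m) (ext m U)"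
  unfolding unitary_iff
proof (intro conjI allI impI ext_carrier)
  fix i j assume ij: "i < Suc m" "j < Suc m"
  have "(\<Sum>k<Suc m. ext m U$$(i,k) * cnj (ext m U$$(j,k))) =
     (\<Sum>k<m. ext m U$$(i,k) * cnj (ext m U$$(j,k))) + ext m U$$(i,m) * cnj (ext m U$$(j,m))" by simp
  also have "\<dots> = (if i = j then 1 else 0)"
  proof (cases "i < m \<and> j < m")
    case True
    then show ?thesis using unitary_rows[OF assms, of i j] by simp
  next
    case False
    then show ?thesis using ij by (auto simp: less_Suc_eq)
  qed
  finally show "(\<Sum>k<Suc m. ext m U$$(i,k) * cnj (ext m U$$(j,k))) = (if i = j then 1 else 0)" .
qed

lemma unitary_ct: assumes "unitary_mat m U" shows "unitary_mat m (conj_transpose U)"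
  unfolding unitary_iff
proof (intro conjI allI impI)
  have U: "U \<in> carrier_mat m m" using assms by (simp add: unitary_carrier)
  then show "conj_transpose U \<in> carrier_mat m m" using ct_carrier[of U] by simp
  fix i j assume ij: "i < m" "j < m"
  then show "(\<Sum>k<m. conj_transpose U$$(i,k) * cnj (conj_transpose U$$(j,k))) = (if i = j then 1 else 0)"
    using U unitary_cols[OF assms ij] by simp
qed

lemma sym_tri: fixes U A :: "complex mat" assumes U: "U \<in> carrier_mat m m" and A: "A \<in> carrier_mat m m"
  and sym: "\<forall>i<m. \<forall>j<m. A$$(i,j) = A$$(j,i)"
  shows "\<forall>i<m. \<forall>j<m. (U * A * transpose_mat U)$$(i,j) = (U * A * transpose_mat U)$$(j,i)"
proof (intro allI impI)
  fix i j assume ij: "i < m" "j < m"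
  have "(U * A * transpose_mat U)$$(i,j) = (\<Sum>k<m. \<Sum>l<m. U$$(i,k) * A$$(k,l) * U$$(j,l))"
    using U A ij by (intro tri) auto
  also have "\<dots> = (\<Sum>l<m. \<Sum>k<m. U$$(i,k) * A$$(k,l) * U$$(j,l))" by (rule sum.swap)
  also have "\<dots> = (\<Sum>l<m. \<Sum>k<m. U$$(j,l) * A$$(l,k) * U$$(i,k))"
  proof (intro sum.cong refl)
    fix l k assume "l \<in> {..<m}" "k \<in> {..<m}"
    then have kl: "A$$(k,l) = A$$(l,k)" using sym by simp
    then show "U$$(i,k) * A$$(k,l) * U$$(j,l) = U$$(j,l) * A$$(l,k) * U$$(i,k)" by (simp add: ac_simps)
  qed
  also have "\<dots> = (U * A * transpose_mat U)$$(j,i)"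
    using U A ij by (intro tri[symmetric]) auto
  finally show "(U * A * transpose_mat U)$$(i,j) = (U * A * transpose_mat U)$$(j,i)" .
qed

section \<open>Takagi factorization\<close>

lemma takagi0:
  fixes A :: "complex mat"
  assumes "A \<in> carrier_mat m m" "\<forall>i<m. \<forall>j<m. A$$(i,j) = A$$(j,i)"
  shows "\<exists>U s. unitary_mat m U \<and> (\<forall>i. s i \<ge> 0) \<and> U * A * transpose_mat U = dg m s"
  using assms
proof (induction m arbitrary: A)
  case 0
  have "1\<^sub>m 0 * A * transpose_mat (1\<^sub>m 0) = dg 0 (\<lambda>_. 0)"
    using 0 by (intro eq_matI) (auto simp: dg_def)
  then show ?case using unitary_one[of 0] by (intro exI[of _ "1\<^sub>m 0"] exI[of _ "\<lambda>_. 0"]) auto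
next
  case (Suc m)
  have A: "A \<in> carrier_mat (Suc m) (Suc m)" and sym: "\<forall>i<Suc m. \<forall>j<Suc m. A$$(i,j) = A$$(j,i)" using Suc by auto
  obtain x \<sigma> where s0: "\<sigma> \<ge> 0" and xn: "(\<Sum>k<Suc m. x k * cnj (x k)) = 1"
    and ex: "\<forall>i<Suc m. (\<Sum>k<Suc m. A$$(i,k) * cnj (x k)) = of_real \<sigma> * x i"
    using eigen_step[OF A _ sym] by auto
  obtain P where P: "unitary_mat (Suc m) P" and Px: "\<forall>i<Suc m. P $$ (i, m) = x i"
    using unit_completion[of "Suc m" x] xn by auto
  have Pc: "P \<in> carrier_mat (Suc m) (Suc m)" using P by (simp add: unitary_carrier)
  define U0 where "U0 = conj_transpose P"
  have U0: "unitary_mat (Suc m) U0" using unitary_ct[OF P] by (simp add: U0_def)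
  have U0c: "U0 \<in> carrier_mat (Suc m) (Suc m)" using U0 by (simp add: unitary_carrier)
  define B where "B = U0 * A * transpose_mat U0"
  have Bc: "B \<in> carrier_mat (Suc m) (Suc m)" using U0c A by (simp add: B_def)
  have Bsym: "\<forall>i<Suc m. \<forall>j<Suc m. B$$(i,j) = B$$(j,i)"
    unfolding B_def by (rule sym_tri[OF U0c A sym])
  have Bcol: "B$$(i,m) = of_real \<sigma> * (if i = m then 1 else 0)" if i: "i < Suc m" for i
  proof -
    have "B$$(i,m) = (\<Sum>k<Suc m. \<Sum>l<Suc m. U0$$(i,k) * A$$(k,l) * U0$$(m,l))"
      unfolding B_def using U0c A i by (intro tri) auto
    also have "\<dots> = (\<Sum>k<Suc m. U0$$(i,k) * (\<Sum>l<Suc m. A$$(k,l) * cnj (x l)))"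
    proof (intro sum.cong refl)
      fix k assume k: "k \<in> {..<Suc m}"
      have "(\<Sum>l<Suc m. U0$$(i,k) * A$$(k,l) * U0$$(m,l)) = (\<Sum>l<Suc m. U0$$(i,k) * (A$$(k,l) * cnj (x l)))"
        using Pc Px by (intro sum.cong refl) (simp add: U0_def)
      then show "(\<Sum>l<Suc m. U0$$(i,k) * A$$(k,l) * U0$$(m,l)) = U0$$(i,k) * (\<Sum>l<Suc m. A$$(k,l) * cnj (x l))"
        by (simp add: sum_distrib_left del: sum.lessThan_Suc)
    qed
    also have "\<dots> = (\<Sum>k<Suc m. U0$$(i,k) * (of_real \<sigma> * x k))"
      using ex by simp
    also have "\<dots> = of_real \<sigma> * (\<Sum>k<Suc m. cnj (P$$(k,i)) * P$$(k,m))"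
      unfolding sum_distrib_left using Pc i Px by (intro sum.cong refl) (simp add: U0_def)
    also have "\<dots> = of_real \<sigma> * (if i = m then 1 else 0)"
      using unitary_cols[OF P i, of m] by simp
    finally show ?thesis .
  qed
  have Bsub: "\<forall>i<m. \<forall>j<m. tlm m B$$(i,j) = tlm m B$$(j,i)" using Bsym by simp
  obtain U' s' where U': "unitary_mat m U'" and s': "\<forall>i. s' i \<ge> 0"
    and D': "U' * tlm m B * transpose_mat U' = dg m s'"
    using Suc.IH[OF tlm_carrier Bsub] by blast
  have U'c: "U' \<in> carrier_mat m m" using U' by (simp add: unitary_carrier)
  define U where "U = ext m U' * U0"
  define s where "s i = (if i < m then s' i else \<sigma>)" for i
  have Uu: "unitary_mat (Suc m) U" unfolding U_def by (rule unitary_mult[OF unitary_ext[OF U'] U0])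
  have Eq: "U * A * transpose_mat U = ext m U' * B * transpose_mat (ext m U')"
  proof -
    let ?E = "ext m U'"
    have Ec: "?E \<in> carrier_mat (Suc m) (Suc m)" by simp
    have "transpose_mat U = transpose_mat U0 * transpose_mat ?E"
      unfolding U_def by (rule transpose_mult[OF Ec U0c])
    then show ?thesis unfolding U_def B_def
      using U0c A Ec by (simp add: assoc_mult_mat[of _ "Suc m" "Suc m" _ "Suc m" _ "Suc m"])
  qed
  have "ext m U' * B * transpose_mat (ext m U') = dg (Suc m) s"
  proof (rule eq_matI)
    fix i j assume ij: "i < dim_row (dg (Suc m) s)" "j < dim_col (dg (Suc m) s)"
    hence ij: "i < Suc m" "j < Suc m" by (auto simp: dg_def)
    have e: "(ext m U' * B * transpose_mat (ext m U')) $$ (i,j) =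
      (if i < m \<and> j < m then (U' * tlm m B * transpose_mat U') $$ (i,j)
       else if i < m then (\<Sum>k<m. U'$$(i,k) * B$$(k,m))
       else if j < m then (\<Sum>l<m. B$$(m,l) * U'$$(j,l))
       else B$$(m,m))" by (rule ext_tri[OF U'c Bc ij])
    have bm: "B$$(m,l) = of_real \<sigma> * (if l = m then 1 else 0)" if "l < Suc m" for l
      using Bsym Bcol that by (metis lessI)
    show "(ext m U' * B * transpose_mat (ext m U')) $$ (i,j) = dg (Suc m) s $$ (i,j)"
      using e ij D' Bcol bm by (auto simp: s_def less_Suc_eq)
  qed (use Bc in \<open>auto simp: dg_def ext_def\<close>)
  moreover have "\<forall>i. 0 \<le> s i" using s' s0 by (simp add: s_def)
  ultimately show ?case using Uu Eq by auto
qed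

lemma perm_dg:
  assumes p: "p permutes {..<m}"
  defines "Pm \<equiv> mat m m (\<lambda>(i,j). if j = p i then 1 else 0 :: complex)"
  shows "unitary_mat m Pm" "Pm * dg m s * transpose_mat Pm = dg m (s \<circ> p)"
proof -
  have pin: "p i < m" if "i < m" for i using permutes_in_image[OF p] that by simp
  have pinj: "p i = p j \<longleftrightarrow> i = j" for i j using permutes_inj[OF p] by (auto dest: injD)
  have Pc: "Pm \<in> carrier_mat m m" by (simp add: Pm_def)
  show "unitary_mat m Pm" unfolding unitary_iff
  proof (intro conjI allI impI Pc)
    fix i j assume ij: "i < m" "j < m"
    have "(\<Sum>k<m. Pm$$(i,k) * cnj (Pm$$(j,k))) = (\<Sum>k<m. if k = p i then (if k = p j then 1 else 0) else 0)"
      using ij by (intro sum.cong refl) (auto simp: Pm_def)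
    also have "\<dots> = (if i = j then 1 else 0)" using pin[OF ij(1)] pinj by simp
    finally show "(\<Sum>k<m. Pm$$(i,k) * cnj (Pm$$(j,k))) = (if i = j then 1 else 0)" .
  qed
  show "Pm * dg m s * transpose_mat Pm = dg m (s \<circ> p)"
  proof (rule eq_matI)
    fix i j assume "i < dim_row (dg m (s \<circ> p))" "j < dim_col (dg m (s \<circ> p))"
    hence ij: "i < m" "j < m" by (auto simp: dg_def)
    have "(Pm * dg m s * transpose_mat Pm) $$ (i,j) = (\<Sum>k<m. \<Sum>l<m. Pm$$(i,k) * dg m s$$(k,l) * Pm$$(j,l))"
      using ij Pc by (intro tri) auto
    also have "\<dots> = (\<Sum>k<m. if k = p i then (\<Sum>l<m. if l = p j then dg m s$$(k,l) else 0) else 0)"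
      using ij by (intro sum.cong refl) (auto simp: Pm_def if_distrib cong: if_cong)
    also have "\<dots> = dg m s $$ (p i, p j)" using pin ij by simp
    also have "\<dots> = dg m (s \<circ> p) $$ (i,j)" using pin ij pinj by simp
    finally show "(Pm * dg m s * transpose_mat Pm) $$ (i,j) = dg m (s \<circ> p) $$ (i,j)" .
  qed (auto simp: Pm_def dg_def)
qed

lemma takagi_sorted:
  fixes A :: "complex mat"
  assumes A: "A \<in> carrier_mat m m" and sym: "\<forall>i<m. \<forall>j<m. A$$(i,j) = A$$(j,i)"
  shows "\<exists>U s. unitary_mat m U \<and> (\<forall>i. s i \<ge> 0) \<and> (\<forall>i j. i \<le> j \<longrightarrow> j < m \<longrightarrow> s j \<le> s i)
     \<and> U * A * transpose_mat U = dg m s"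
proof -
  obtain U s where U: "unitary_mat m U" and s: "\<forall>i. s i \<ge> 0" and D: "U * A * transpose_mat U = dg m s"
    using takagi0[OF A sym] by blast
  define xs where "xs = map s [0..<m]"
  define ys where "ys = rev (sort xs)"
  have "mset ys = mset xs" by (simp add: ys_def)
  then obtain p where p: "p permutes {..<length xs}" and pl: "permute_list p xs = ys"
    using mset_eq_permutation by metis
  have lx: "length xs = m" by (simp add: xs_def)
  have p': "p permutes {..<m}" using p lx by simp
  have ysn: "ys ! i = s (p i)" if "i < m" for i
  proof -
    have "ys ! i = xs ! p i" using permute_list_nth[OF p] that lx pl by auto
    moreover have "p i < m" using permutes_in_image[OF p'] that by simp
    ultimately show ?thesis by (simp add: xs_def)
  qed
  have mono: "s (p j) \<le> s (p i)" if "i \<le> j" "j < m" for i j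
  proof -
    have ls: "length (sort xs) = m" using lx by simp
    have "ys ! j = sort xs ! (m - Suc j)" using that ls by (simp add: ys_def rev_nth)
    moreover have "ys ! i = sort xs ! (m - Suc i)" using that ls by (simp add: ys_def rev_nth)
    moreover have "sort xs ! (m - Suc j) \<le> sort xs ! (m - Suc i)"
      using that ls by (intro sorted_nth_mono) auto
    ultimately show ?thesis using ysn that by simp
  qed
  define Pm where "Pm = mat m m (\<lambda>(i,j). if j = p i then 1 else 0 :: complex)"
  have Pu: "unitary_mat m Pm" and PD: "Pm * dg m s * transpose_mat Pm = dg m (s \<circ> p)"
    using perm_dg[OF p'] by (auto simp: Pm_def)
  have Pc: "Pm \<in> carrier_mat m m" and Uc: "U \<in> carrier_mat m m" using Pu U by (auto simp: unitary_carrier)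
  have "Pm * U * A * transpose_mat (Pm * U) = Pm * (U * A * transpose_mat U) * transpose_mat Pm"
    using Pc Uc A by (simp add: transpose_mult[OF Pc Uc] assoc_mult_mat[of _ m m _ m _ m])
  also have "\<dots> = dg m (s \<circ> p)" using D PD by simp
  finally show ?thesis using unitary_mult[OF Pu U] s mono
    by (intro exI[of _ "Pm * U"] exI[of _ "s \<circ> p"]) auto
qed

definition normalized :: "nat \<Rightarrow> (nat \<Rightarrow> real) \<Rightarrow> bool" where
  "normalized m l \<longleftrightarrow> (\<forall>i<m. l i = 0) \<or>
     (l 0 = 1 \<and> (\<forall>i j. i \<le> j \<longrightarrow> j < m \<longrightarrow> l j \<le> l i) \<and> (\<forall>i<m. 0 \<le> l i))"

lemma smult_tri: fixes U A :: "complex mat" assumes "U \<in> carrier_mat m m" "A \<in> carrier_mat m m"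
  shows "(z \<cdot>\<^sub>m U) * A * transpose_mat (z \<cdot>\<^sub>m U) = (z * z) \<cdot>\<^sub>m (U * A * transpose_mat U)"
proof (rule eq_matI)
  fix i j assume "i < dim_row ((z * z) \<cdot>\<^sub>m (U * A * transpose_mat U))" "j < dim_col ((z * z) \<cdot>\<^sub>m (U * A * transpose_mat U))"
  hence ij: "i < m" "j < m" using assms by auto
  have "((z \<cdot>\<^sub>m U) * A * transpose_mat (z \<cdot>\<^sub>m U)) $$ (i,j) = (\<Sum>k<m. \<Sum>l<m. (z \<cdot>\<^sub>m U)$$(i,k) * A$$(k,l) * (z \<cdot>\<^sub>m U)$$(j,l))"
    using assms ij by (intro tri) auto
  also have "\<dots> = (z * z) * (\<Sum>k<m. \<Sum>l<m. U$$(i,k) * A$$(k,l) * U$$(j,l))"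
    using assms ij by (simp add: sum_distrib_left ac_simps)
  also have "\<dots> = (z * z) * (U * A * transpose_mat U) $$ (i,j)"
    by (simp only: tri[OF assms(1) assms(2) assms(1) ij])
  also have "\<dots> = ((z * z) \<cdot>\<^sub>m (U * A * transpose_mat U)) $$ (i,j)"
    using assms ij by simp
  finally show "((z \<cdot>\<^sub>m U) * A * transpose_mat (z \<cdot>\<^sub>m U)) $$ (i,j) = ((z * z) \<cdot>\<^sub>m (U * A * transpose_mat U)) $$ (i,j)" .
qed (use assms in auto)

lemma takagi_normalized:
  fixes A :: "complex mat"
  assumes A: "A \<in> carrier_mat m m" and sym: "\<forall>i<m. \<forall>j<m. A$$(i,j) = A$$(j,i)" and w: "w \<noteq> 0"
  shows "\<exists>U t l. unitary_mat m U \<and> t > 0 \<and> normalized m l \<and>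
     (w * of_real t) \<cdot>\<^sub>m (U * A * transpose_mat U) = dg m l"
proof -
  obtain U s where U: "unitary_mat m U" and s: "\<forall>i. s i \<ge> 0" and mono: "\<forall>i j. i \<le> j \<longrightarrow> j < m \<longrightarrow> s j \<le> s i"
    and D: "U * A * transpose_mat U = dg m s"
    using takagi_sorted[OF A sym] by blast
  have Uc: "U \<in> carrier_mat m m" using U by (simp add: unitary_carrier)
  obtain \<psi> where ps: "cmod \<psi> = 1" and psw: "cnj \<psi> * w = of_real (cmod w)" using phase_exists by blast
  define \<phi> where "\<phi> = csqrt (cnj \<psi>)"
  have ph1: "cmod \<phi> = 1" using ps by (simp add: \<phi>_def)
  have phsq: "\<phi> * \<phi> = cnj \<psi>" by (metis \<phi>_def power2_csqrt power2_eq_square)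
  define U2 where "U2 = \<phi> \<cdot>\<^sub>m U"
  have U2: "unitary_mat m U2" using unitary_smult[OF U ph1] by (simp add: U2_def)
  have D2: "U2 * A * transpose_mat U2 = cnj \<psi> \<cdot>\<^sub>m dg m s"
    unfolding U2_def smult_tri[OF Uc A] phsq D ..
  define c where "c = cmod w"
  have c: "c > 0" using w by (simp add: c_def)
  have key: "(w * of_real t) \<cdot>\<^sub>m (U2 * A * transpose_mat U2) = dg m (\<lambda>i. t * c * s i)" for t
  proof -
    have "w * of_real t * cnj \<psi> = of_real (t * c)" using psw by (simp add: c_def ac_simps)
    then show ?thesis unfolding D2
      by (intro eq_matI) (auto simp: dg_def mult.assoc[symmetric])
  qed
  show ?thesis
  proof (cases "m = 0 \<or> s 0 = 0")
    case True
    have "\<forall>i<m. s i = 0"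
    proof (intro allI impI)
      fix i assume i: "i < m"
      then have "s i \<le> s 0" using mono by auto
      moreover have "s 0 = 0" using True i by auto
      ultimately show "s i = 0" using s[rule_format, of i] by linarith
    qed
    then have "normalized m (\<lambda>i. 1 * c * s i)"
      unfolding normalized_def by auto
    then show ?thesis using key[of 1] U2 by (intro exI[of _ U2] exI[of _ 1] exI[of _ "\<lambda>i. 1 * c * s i"]) auto
  next
    case False
    then have s0: "s 0 > 0" and m: "0 < m" using s by (auto simp: order_le_less)
    define t where "t = 1 / (c * s 0)"
    have t: "t > 0" using c s0 by (simp add: t_def)
    have "normalized m (\<lambda>i. t * c * s i)"
      unfolding normalized_def using c s0 s mono m
      by (auto simp: t_def intro!: divide_right_mono mult_left_mono)
    then show ?thesis using key[of t] U2 t by blast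
  qed
qed

lemma bB_in[simp]: "i < m \<Longrightarrow> k < m \<Longrightarrow> block_B (Suc m) V c d $$ (i,k) = V $$ (i,k)"
  by (simp add: block_B_def)
lemma bB_c[simp]: "i < m \<Longrightarrow> block_B (Suc m) V c d $$ (i,m) = c $ i"
  by (simp add: block_B_def)
lemma bB_r[simp]: "k < m \<Longrightarrow> block_B (Suc m) V c d $$ (m,k) = 0"
  by (simp add: block_B_def)
lemma bB_d[simp]: "block_B (Suc m) V c d $$ (m,m) = d"
  by (simp add: block_B_def)
lemma bB_carrier[simp]: "block_B n V c d \<in> carrier_mat n n"
  by (simp add: block_B_def)
lemma bB_dims[simp]: "dim_row (block_B n V c d) = n" "dim_col (block_B n V c d) = n"
  by (simp_all add: block_B_def)

definition qv :: "nat \<Rightarrow> complex mat \<Rightarrow> complex mat \<Rightarrow> nat \<Rightarrow> complex" where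
  "qv m V H i = (\<Sum>k<m. V$$(i,k) * H$$(k,m))"

lemma act_entry:
  assumes H: "H \<in> carrier_mat (Suc m) (Suc m)" and sym: "\<forall>i<Suc m. \<forall>j<Suc m. H$$(i,j) = H$$(j,i)"
    and ij: "i < Suc m" "j < Suc m" and V: "V \<in> carrier_mat m m"
  shows "act (Suc m) a V c d H $$ (i,j) = of_real a * cnj d *
    (if i < m \<and> j < m then (V * tlm m H * transpose_mat V) $$ (i,j) + c$i * qv m V H j + c$j * qv m V H i
        + c$i * c$j * H$$(m,m)
     else if i < m then d * (qv m V H i + c$i * H$$(m,m))
     else if j < m then d * (qv m V H j + c$j * H$$(m,m))
     else d * d * H$$(m,m))"
proof -
  let ?B = "block_B (Suc m) V c d"
  have "act (Suc m) a V c d H $$ (i,j) = of_real a * cnj d * (?B * H * transpose_mat ?B) $$ (i,j)"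
    using H ij by (simp add: act_def)
  also have "(?B * H * transpose_mat ?B) $$ (i,j) = (\<Sum>k<Suc m. \<Sum>l<Suc m. ?B$$(i,k) * H$$(k,l) * ?B$$(j,l))"
    using H ij by (intro tri) auto
  also have "\<dots> = (\<Sum>k<m. \<Sum>l<m. ?B$$(i,k) * H$$(k,l) * ?B$$(j,l))
     + (\<Sum>k<m. ?B$$(i,k) * H$$(k,m) * ?B$$(j,m))
     + (\<Sum>l<m. ?B$$(i,m) * H$$(m,l) * ?B$$(j,l))
     + ?B$$(i,m) * H$$(m,m) * ?B$$(j,m)" by (rule sum2_Suc)
  finally have e: "act (Suc m) a V c d H $$ (i,j) = of_real a * cnj d * \<dots>" .
  have hm: "H$$(m,l) = H$$(l,m)" if "l < m" for l using sym that by auto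
  show ?thesis
  proof (cases "i < m")
    case i: True
    show ?thesis
    proof (cases "j < m")
      case j: True
      have "(V * tlm m H * transpose_mat V) $$ (i,j) = (\<Sum>k<m. \<Sum>l<m. V$$(i,k) * tlm m H$$(k,l) * V$$(j,l))"
        using i j V by (intro tri) (auto simp: tlm_def)
      moreover have "(\<Sum>k<m. \<Sum>l<m. V$$(i,k) * tlm m H$$(k,l) * V$$(j,l)) = (\<Sum>k<m. \<Sum>l<m. ?B$$(i,k) * H$$(k,l) * ?B$$(j,l))"
        using i j by (intro sum.cong refl) auto
      moreover have "(\<Sum>k<m. ?B$$(i,k) * H$$(k,m) * ?B$$(j,m)) = c$j * qv m V H i"
        using i j by (simp add: qv_def sum_distrib_left ac_simps)
      moreover have "(\<Sum>l<m. ?B$$(i,m) * H$$(m,l) * ?B$$(j,l)) = c$i * qv m V H j"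
        using i j hm by (simp add: qv_def sum_distrib_left ac_simps)
      ultimately show ?thesis using e i j by (simp add: ac_simps)
    next
      case j: False
      then have jm: "j = m" using ij by simp
      have "(\<Sum>k<m. ?B$$(i,k) * H$$(k,m) * ?B$$(j,m)) = d * qv m V H i"
        using i jm by (simp add: qv_def sum_distrib_left ac_simps)
      then show ?thesis using e i jm by (simp add: algebra_simps)
    qed
  next
    case i: False
    then have im: "i = m" using ij by simp
    show ?thesis
    proof (cases "j < m")
      case j: True
      have "(\<Sum>l<m. ?B$$(i,m) * H$$(m,l) * ?B$$(j,l)) = d * qv m V H j"
        using im j hm by (simp add: qv_def sum_distrib_left ac_simps)
      then show ?thesis using e im j by (simp add: algebra_simps)
    next
      case j: False
      then have jm: "j = m" using ij by simp
      show ?thesis using e im jm by simp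
    qed
  qed
qed

lemma normal_form_entry:
  assumes "i < Suc m" "j < Suc m" "0 < m"
  shows "normal_form (Suc m) k lam $$ (i,j) =
    (if i < m \<and> j < m then (if i = j then complex_of_real (lam ! i) else 0)
     else if i < m then (if k = 1 \<and> i = m - 1 then 1 else 0)
     else if j < m then (if k = 1 \<and> j = m - 1 then 1 else 0)
     else (if k = 3 then 1 else 0))"
  using assms by (auto simp: normal_form_def)

section \<open>Existence\<close>

lemma adm_U:
  assumes "a > 0" "d \<noteq> 0" "unitary_mat m U" "c \<in> carrier_vec m"
  shows "admissible_params (Suc m) a (of_real (1 / sqrt a) \<cdot>\<^sub>m U) c d"
proof -
  have Uc: "U \<in> carrier_mat m m" using assms by (simp add: unitary_carrier)
  have "of_real (sqrt a) \<cdot>\<^sub>m (of_real (1 / sqrt a) \<cdot>\<^sub>m U) = U"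
    using assms Uc by (intro eq_matI) (auto simp flip: of_real_mult)
  then show ?thesis using assms Uc by (simp add: admissible_params_def)
qed

lemma VtriU:
  fixes U X :: "complex mat"
  assumes "a > 0" "U \<in> carrier_mat m m" "X \<in> carrier_mat m m"
  shows "(of_real (1 / sqrt a) \<cdot>\<^sub>m U) * X * transpose_mat (of_real (1 / sqrt a) \<cdot>\<^sub>m U) =
    of_real (1 / a) \<cdot>\<^sub>m (U * X * transpose_mat U)"
proof -
  have "(of_real (1 / sqrt a) * of_real (1 / sqrt a) :: complex) = of_real (1 / a)"
    using assms(1) by (simp flip: of_real_mult add: real_sqrt_mult[symmetric])
  then show ?thesis using smult_tri[OF assms(2,3), of "of_real (1 / sqrt a)"] by simp
qed

lemma qv_smult: "U \<in> carrier_mat m m \<Longrightarrow> i < m \<Longrightarrow> qv m (z \<cdot>\<^sub>m U) H i = z * qv m U H i"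
  by (simp add: qv_def sum_distrib_left ac_simps)

lemma norm_adm:
  assumes "normalized m l" "k \<noteq> 1"
  shows "admissible_lambda (Suc m) k (map l [0..<m])"
  using assms unfolding normalized_def admissible_lambda_def
  by (cases m) (auto simp del: upt_Suc simp: nth_map_upt)

definition Ap :: "nat \<Rightarrow> complex mat \<Rightarrow> complex mat" where
  "Ap m H = mat m m (\<lambda>(i,j). H$$(i,j) - H$$(i,m) * H$$(j,m) / H$$(m,m))"

lemma Ap_carrier[simp]: "Ap m H \<in> carrier_mat m m" by (simp add: Ap_def)

lemma Ap_sym: "\<forall>i<Suc m. \<forall>j<Suc m. H$$(i,j) = H$$(j,i) \<Longrightarrow> \<forall>i<m. \<forall>j<m. Ap m H$$(i,j) = Ap m H$$(j,i)"
  by (simp add: Ap_def ac_simps)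

lemma bracket:
  fixes V H :: "complex mat"
  assumes V: "V \<in> carrier_mat m m" and ij: "i < m" "j < m"
  defines "A' \<equiv> Ap m H" and "h \<equiv> H$$(m,m)"
  shows "(V * A' * transpose_mat V) $$ (i,j) = (V * tlm m H * transpose_mat V) $$ (i,j) - qv m V H i * qv m V H j / h"
proof -
  have "(V * A' * transpose_mat V) $$ (i,j) = (\<Sum>k<m. \<Sum>l<m. V$$(i,k) * A'$$(k,l) * V$$(j,l))"
    using V ij by (intro tri) (auto simp: A'_def)
  also have "\<dots> = (\<Sum>k<m. \<Sum>l<m. V$$(i,k) * tlm m H$$(k,l) * V$$(j,l) - (V$$(i,k) * H$$(k,m)) * (V$$(j,l) * H$$(l,m)) / h)"
    by (intro sum.cong refl) (auto simp: A'_def Ap_def h_def algebra_simps)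
  also have "\<dots> = (\<Sum>k<m. \<Sum>l<m. V$$(i,k) * tlm m H$$(k,l) * V$$(j,l)) - (\<Sum>k<m. \<Sum>l<m. (V$$(i,k) * H$$(k,m)) * (V$$(j,l) * H$$(l,m)) / h)"
    by (simp add: sum_subtractf)
  also have "(\<Sum>k<m. \<Sum>l<m. (V$$(i,k) * H$$(k,m)) * (V$$(j,l) * H$$(l,m)) / h) = qv m V H i * qv m V H j / h"
    by (simp add: qv_def sum_product sum_divide_distrib)
  also have "(\<Sum>k<m. \<Sum>l<m. V$$(i,k) * tlm m H$$(k,l) * V$$(j,l)) = (V * tlm m H * transpose_mat V) $$ (i,j)"
    using V ij by (intro tri[symmetric]) auto
  finally show ?thesis .
qed

lemma exist3:
  fixes H :: "complex mat"
  assumes H: "H \<in> carrier_mat (Suc m) (Suc m)" and sym: "\<forall>i<Suc m. \<forall>j<Suc m. H$$(i,j) = H$$(j,i)"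
    and m: "0 < m" and h: "H$$(m,m) \<noteq> 0"
  shows "\<exists>lam. admissible_lambda (Suc m) 3 lam \<and>
     (\<exists>a V c d. admissible_params (Suc m) a V c d \<and> act (Suc m) a V c d H = normal_form (Suc m) 3 lam)"
proof -
  define h where "h = H$$(m,m)"
  have hn: "h \<noteq> 0" using h by (simp add: h_def)
  define w0 where "w0 = of_real (cmod h) / cnj h"
  have w0: "w0 \<noteq> 0" using hn by (simp add: w0_def)
  obtain U t l where U: "unitary_mat m U" and t: "t > 0" and nl: "normalized m l"
    and D: "(w0 * of_real t) \<cdot>\<^sub>m (U * Ap m H * transpose_mat U) = dg m l"
    using takagi_normalized[OF Ap_carrier Ap_sym[OF sym] w0] by blast
  have Uc: "U \<in> carrier_mat m m" using U by (simp add: unitary_carrier)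
  define d where "d = of_real t * of_real (cmod h) / h"
  define a where "a = 1 / (t ^ 3 * cmod h)"
  have a: "a > 0" using t hn by (simp add: a_def)
  have dn: "d \<noteq> 0" using t hn by (simp add: d_def)
  define V where "V = of_real (1 / sqrt a) \<cdot>\<^sub>m U"
  have Vc: "V \<in> carrier_mat m m" using Uc by (simp add: V_def)
  define c where "c = vec m (\<lambda>i. - qv m V H i / h)"
  have adm: "admissible_params (Suc m) a V c d" unfolding V_def
    by (rule adm_U[OF a dn U]) (simp add: c_def)
  have cd: "cnj d = w0 * of_real t" by (simp add: d_def w0_def)
  have cdd: "cnj d * d = of_real (t^2)"
  proof -
    have "cnj d * d = of_real t * of_real t * (of_real (cmod h) * of_real (cmod h)) / (cnj h * h)"
      by (simp add: d_def)
    also have "cnj h * h = of_real (cmod h) * of_real (cmod h)"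
      by (metis complex_norm_square mult.commute of_real_mult power2_eq_square)
    finally show ?thesis using hn by (simp add: power2_eq_square)
  qed
  have corner: "of_real a * cnj d * (d * d * h) = 1"
  proof -
    have "of_real a * cnj d * (d * d * h) = of_real a * (cnj d * d) * (d * h)" by (simp add: ac_simps)
    also have "d * h = of_real (t * cmod h)" using hn by (simp add: d_def)
    also note cdd
    also have "of_real a * of_real (t^2) * of_real (t * cmod h) = (of_real (a * t^2 * (t * cmod h)) :: complex)"
      by simp
    also have "a * t^2 * (t * cmod h) = 1" using t hn by (simp add: a_def power3_eq_cube power2_eq_square)
    finally show ?thesis by simp
  qed
  define lam where "lam = map l [0..<m]"
  have al: "admissible_lambda (Suc m) 3 lam" unfolding lam_def by (rule norm_adm[OF nl]) simp
  have "act (Suc m) a V c d H = normal_form (Suc m) 3 lam"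
  proof (rule eq_matI)
    fix i j assume "i < dim_row (normal_form (Suc m) 3 lam)" "j < dim_col (normal_form (Suc m) 3 lam)"
    hence ij: "i < Suc m" "j < Suc m" by (auto simp: normal_form_def)
    note e = act_entry[OF H sym ij Vc, of a c d]
    note nf = normal_form_entry[OF ij m, of 3 lam]
    show "act (Suc m) a V c d H $$ (i,j) = normal_form (Suc m) 3 lam $$ (i,j)"
    proof (cases "i < m \<and> j < m")
      case True
      have ci: "c$i = - qv m V H i / h" "c$j = - qv m V H j / h" using True by (auto simp: c_def)
      have "(V * tlm m H * transpose_mat V) $$ (i,j) + c$i * qv m V H j + c$j * qv m V H i + c$i * c$j * H$$(m,m)
         = (V * tlm m H * transpose_mat V) $$ (i,j) - qv m V H i * qv m V H j / h"
        using hn unfolding ci h_def[symmetric] by (simp add: field_simps power2_eq_square)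
      also have "\<dots> = (V * Ap m H * transpose_mat V) $$ (i,j)"
        using bracket[OF Vc, of i j H] True by (simp add: h_def)
      also have "\<dots> = of_real (1 / a) * (U * Ap m H * transpose_mat U) $$ (i,j)"
        unfolding V_def VtriU[OF a Uc Ap_carrier] using True Uc by simp
      finally have br: "(V * tlm m H * transpose_mat V) $$ (i,j) + c$i * qv m V H j + c$j * qv m V H i + c$i * c$j * H$$(m,m)
         = of_real (1 / a) * (U * Ap m H * transpose_mat U) $$ (i,j)" .
      have "act (Suc m) a V c d H $$ (i,j) = of_real a * cnj d * (of_real (1 / a) * (U * Ap m H * transpose_mat U) $$ (i,j))"
        using e True br by simp
      also have "\<dots> = (w0 * of_real t) * (U * Ap m H * transpose_mat U) $$ (i,j)"
        using a cd by (simp add: field_simps)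
      also have "\<dots> = dg m l $$ (i,j)" using D[symmetric] True Uc by simp
      also have "\<dots> = normal_form (Suc m) 3 lam $$ (i,j)" using nf True by (simp add: lam_def)
      finally show ?thesis .
    next
      case False
      have q: "qv m V H i + c$i * H$$(m,m) = 0" if "i < m" for i
        using that hn by (simp add: c_def h_def)
      show ?thesis using False e nf q corner ij by (auto simp: h_def less_Suc_eq)
    qed
  qed (auto simp: normal_form_def act_def)
  then show ?thesis using al adm by blast
qed

lemma exist2:
  fixes H :: "complex mat"
  assumes H: "H \<in> carrier_mat (Suc m) (Suc m)" and sym: "\<forall>i<Suc m. \<forall>j<Suc m. H$$(i,j) = H$$(j,i)"
    and m: "0 < m" and h: "H$$(m,m) = 0" and b: "\<forall>k<m. H$$(k,m) = 0"
  shows "\<exists>lam. admissible_lambda (Suc m) 2 lam \<and>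
     (\<exists>a V c d. admissible_params (Suc m) a V c d \<and> act (Suc m) a V c d H = normal_form (Suc m) 2 lam)"
proof -
  have tsym: "\<forall>i<m. \<forall>j<m. tlm m H$$(i,j) = tlm m H$$(j,i)" using sym by simp
  obtain U t l where U: "unitary_mat m U" and t: "t > 0" and nl: "normalized m l"
    and D: "(1 * of_real t) \<cdot>\<^sub>m (U * tlm m H * transpose_mat U) = dg m l"
    using takagi_normalized[OF tlm_carrier tsym, of 1] by auto
  have Uc: "U \<in> carrier_mat m m" using U by (simp add: unitary_carrier)
  define a :: real where "a = 1"
  define d where "d = (of_real t :: complex)"
  have a: "a > 0" by (simp add: a_def)
  have dn: "d \<noteq> 0" using t by (simp add: d_def)
  define V where "V = of_real (1 / sqrt a) \<cdot>\<^sub>m U"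
  have Vc: "V \<in> carrier_mat m m" using Uc by (simp add: V_def)
  define c where "c = (0\<^sub>v m :: complex vec)"
  have adm: "admissible_params (Suc m) a V c d" unfolding V_def
    by (rule adm_U[OF a dn U]) (simp add: c_def)
  define lam where "lam = map l [0..<m]"
  have al: "admissible_lambda (Suc m) 2 lam" unfolding lam_def by (rule norm_adm[OF nl]) simp
  have q: "qv m V H i = 0" for i using b by (simp add: qv_def)
  have "act (Suc m) a V c d H = normal_form (Suc m) 2 lam"
  proof (rule eq_matI)
    fix i j assume "i < dim_row (normal_form (Suc m) 2 lam)" "j < dim_col (normal_form (Suc m) 2 lam)"
    hence ij: "i < Suc m" "j < Suc m" by (auto simp: normal_form_def)
    note e = act_entry[OF H sym ij Vc, of a c d]
    note nf = normal_form_entry[OF ij m, of 2 lam]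
    show "act (Suc m) a V c d H $$ (i,j) = normal_form (Suc m) 2 lam $$ (i,j)"
    proof (cases "i < m \<and> j < m")
      case True
      have VU: "V = U" using Uc by (simp add: V_def a_def) (intro eq_matI, auto)
      have "act (Suc m) a V c d H $$ (i,j) = of_real t * (U * tlm m H * transpose_mat U) $$ (i,j)"
        using e True q VU by (simp add: c_def a_def d_def)
      also have "\<dots> = dg m l $$ (i,j)" using D[symmetric] True Uc by simp
      also have "\<dots> = normal_form (Suc m) 2 lam $$ (i,j)" using nf True by (simp add: lam_def)
      finally show ?thesis .
    next
      case False
      show ?thesis using False e nf q h ij by (auto simp: less_Suc_eq c_def)
    qed
  qed (auto simp: normal_form_def act_def)
  then show ?thesis using al adm by blast
qed

lemma conj_prod:
  fixes E U0 X :: "complex mat"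
  assumes "E \<in> carrier_mat n n" "U0 \<in> carrier_mat n n" "X \<in> carrier_mat n n"
  shows "(E * U0) * X * transpose_mat (E * U0) = E * (U0 * X * transpose_mat U0) * transpose_mat E"
proof -
  have "transpose_mat (E * U0) = transpose_mat U0 * transpose_mat E"
    by (rule transpose_mult[OF assms(1,2)])
  then show ?thesis using assms by (simp add: assoc_mult_mat[of _ n n _ n _ n])
qed

lemma adm_lam1:
  assumes nl: "normalized m' l" and lam: "lam = map (\<lambda>i. if i < m' then l i else 0) [0..<Suc m']"
  shows "admissible_lambda (Suc (Suc m')) 1 lam"
proof (cases "\<forall>i<m'. l i = 0")
  case True
  then show ?thesis by (auto simp: admissible_lambda_def lam simp del: upt_Suc)
next
  case False
  then have l0: "l 0 = 1" and mono: "\<forall>i j. i \<le> j \<longrightarrow> j < m' \<longrightarrow> l j \<le> l i" and nn: "\<forall>i<m'. 0 \<le> l i"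
    using nl by (auto simp: normalized_def)
  from False obtain i0 where "i0 < m'" by auto
  then have m': "0 < m'" by simp
  have nth: "lam ! i = (if i < m' then l i else 0)" if "i < Suc m'" for i
    using that by (simp add: lam nth_map_upt del: upt_Suc)
  show ?thesis unfolding admissible_lambda_def
  proof (intro conjI disjI2)
    show "length lam = Suc (Suc m') - 1" by (simp add: lam del: upt_Suc)
    show "lam ! 0 = 1" using nth[of 0] m' l0 by simp
    have nn': "\<forall>i<Suc m'. 0 \<le> lam ! i" using nth nn by auto
    show "\<forall>i<Suc (Suc m') - 1. 0 \<le> lam ! i" using nn' by auto
    show "\<forall>i j. i \<le> j \<longrightarrow> j < Suc (Suc m') - 1 \<longrightarrow> lam ! j \<le> lam ! i"
    proof (intro allI impI)
      fix i j assume ij: "i \<le> j" "j < Suc (Suc m') - 1"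
      show "lam ! j \<le> lam ! i"
      proof (cases "j < m'")
        case True then show ?thesis using nth ij mono by auto
      next
        case False then have "j = m'" using ij by simp
        then show ?thesis using nth[of j] nn'[rule_format, of i] ij by simp
      qed
    qed
    show "1 = 1 \<longrightarrow> lam ! (Suc (Suc m') - 2) = 0" using nth[of m'] by simp
  qed
qed

lemma exist1:
  fixes H :: "complex mat"
  assumes H: "H \<in> carrier_mat (Suc m) (Suc m)" and sym: "\<forall>i<Suc m. \<forall>j<Suc m. H$$(i,j) = H$$(j,i)"
    and m: "0 < m" and h: "H$$(m,m) = 0" and b: "k0 < m" "H$$(k0,m) \<noteq> 0"
  shows "\<exists>lam. admissible_lambda (Suc m) 1 lam \<and>
     (\<exists>a V c d. admissible_params (Suc m) a V c d \<and> act (Suc m) a V c d H = normal_form (Suc m) 1 lam)"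
proof -
  obtain m' where mm: "m = Suc m'" using m by (cases m) auto
  define bb where "bb k = H$$(k,m)" for k
  define Sb where "Sb = (\<Sum>k<m. (cmod (bb k))^2)"
  have Sb: "Sb > 0" using sum_sq_pos[of k0 m bb] b by (simp add: Sb_def bb_def)
  define \<beta> where "\<beta> = sqrt Sb"
  have be: "\<beta> > 0" using Sb by (simp add: \<beta>_def)
  define x where "x k = bb k / of_real \<beta>" for k
  have "(\<Sum>k<m. x k * cnj (x k)) = (\<Sum>k<m. bb k * cnj (bb k)) / of_real (\<beta>^2)"
    by (simp add: x_def sum_divide_distrib power2_eq_square)
  also have "\<dots> = 1" using Sb by (simp add: sum_cnj_self Sb_def[symmetric] \<beta>_def)
  finally have xn: "(\<Sum>k<m. x k * cnj (x k)) = 1" .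
  obtain P where P: "unitary_mat m P" and Px: "\<forall>i<m. P $$ (i, m - 1) = x i"
    using unit_completion[OF m xn] by blast
  have Pc: "P \<in> carrier_mat m m" using P by (simp add: unitary_carrier)
  define U0 where "U0 = conj_transpose P"
  have U0: "unitary_mat m U0" using unitary_ct[OF P] by (simp add: U0_def)
  have U0c: "U0 \<in> carrier_mat m m" using U0 by (simp add: unitary_carrier)
  have U0b: "(\<Sum>k<m. U0$$(j,k) * bb k) = of_real \<beta> * (if j = m' then 1 else 0)" if j: "j < m" for j
  proof -
    have "(\<Sum>k<m. U0$$(j,k) * bb k) = (\<Sum>k<m. of_real \<beta> * (cnj (P$$(k,j)) * P$$(k,m')))"
      using Pc j Px be by (intro sum.cong refl) (auto simp: U0_def x_def mm)
    also have "\<dots> = of_real \<beta> * (if j = m' then 1 else 0)"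
      using unitary_cols[OF P j, of m'] by (simp add: sum_distrib_left[symmetric] mm)
    finally show ?thesis .
  qed
  define M0 where "M0 = U0 * tlm m H * transpose_mat U0"
  have M0c: "M0 \<in> carrier_mat (Suc m') (Suc m')" unfolding M0_def using U0c by (auto simp: mm intro!: mult_carrier_mat)
  have tsym: "\<forall>i<m. \<forall>j<m. tlm m H$$(i,j) = tlm m H$$(j,i)" using sym by simp
  have M0sym: "\<forall>i<m. \<forall>j<m. M0$$(i,j) = M0$$(j,i)"
    unfolding M0_def by (rule sym_tri[OF U0c tlm_carrier tsym])
  have A1sym: "\<forall>i<m'. \<forall>j<m'. tlm m' M0$$(i,j) = tlm m' M0$$(j,i)" using M0sym mm by simp
  obtain U1 t l where U1: "unitary_mat m' U1" and t: "t > 0" and nl: "normalized m' l"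
    and D: "(1 * of_real t) \<cdot>\<^sub>m (U1 * tlm m' M0 * transpose_mat U1) = dg m' l"
    using takagi_normalized[OF tlm_carrier A1sym, of 1] by auto
  have U1c: "U1 \<in> carrier_mat m' m'" using U1 by (simp add: unitary_carrier)
  define E where "E = ext m' U1"
  have Ec: "E \<in> carrier_mat m m" by (simp add: E_def mm)
  define U where "U = E * U0"
  have Uu: "unitary_mat m U" unfolding U_def E_def mm using unitary_mult[OF unitary_ext[OF U1] U0[unfolded mm]] .
  have Uc: "U \<in> carrier_mat m m" using Uu by (simp add: unitary_carrier)
  define M where "M = U * tlm m H * transpose_mat U"
  have MM: "M = E * M0 * transpose_mat E" unfolding M_def U_def M0_def
    by (rule conj_prod[OF Ec U0c tlm_carrier])
  have Msym: "\<forall>i<m. \<forall>j<m. M$$(i,j) = M$$(j,i)"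
    unfolding M_def by (rule sym_tri[OF Uc tlm_carrier tsym])
  have Min: "M$$(i,j) = (U1 * tlm m' M0 * transpose_mat U1) $$ (i,j)" if "i < m'" "j < m'" for i j
    using ext_tri[OF U1c M0c, of i j] that unfolding MM E_def by simp
  have Ub: "(\<Sum>k<m. U$$(i,k) * bb k) = of_real \<beta> * (if i = m' then 1 else 0)" if i: "i < m" for i
  proof -
    have "(\<Sum>k<m. U$$(i,k) * bb k) = (\<Sum>k<m. (\<Sum>j<m. E$$(i,j) * U0$$(j,k)) * bb k)"
      using i Ec U0c by (intro sum.cong refl) (simp add: U_def scalar_prod_def atLeast0LessThan)
    also have "\<dots> = (\<Sum>k<m. \<Sum>j<m. E$$(i,j) * (U0$$(j,k) * bb k))"
      by (simp add: sum_distrib_left sum_distrib_right ac_simps)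
    also have "\<dots> = (\<Sum>j<m. \<Sum>k<m. E$$(i,j) * (U0$$(j,k) * bb k))"
      by (rule sum.swap)
    also have "\<dots> = (\<Sum>j<m. E$$(i,j) * (\<Sum>k<m. U0$$(j,k) * bb k))"
      by (simp add: sum_distrib_left)
    also have "\<dots> = (\<Sum>j<m. E$$(i,j) * (of_real \<beta> * (if j = m' then 1 else 0)))"
      using U0b by simp
    also have "\<dots> = of_real \<beta> * E$$(i,m')" using mm by (simp add: if_distrib[of "\<lambda>x. _ * x"] cong: if_cong)
    also have "\<dots> = of_real \<beta> * (if i = m' then 1 else 0)" using i mm by (simp add: E_def)
    finally show ?thesis .
  qed
  define a where "a = 1 / (t^4 * \<beta>^2)"
  have a: "a > 0" using t be by (simp add: a_def)
  have t4: "sqrt (t^4) = t^2" by (metis power2_eq_square power_mult_distrib real_sqrt_abs abs_power2 numeral_Bit0 power_add)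
  have t44: "t^4 = t^2 * t^2" by (simp flip: power_add)
  have sa: "1 / sqrt a = t^2 * \<beta>" using t be t4 by (simp add: a_def real_sqrt_mult real_sqrt_divide)
  define d where "d = (of_real t :: complex)"
  have dn: "d \<noteq> 0" using t by (simp add: d_def)
  define V where "V = of_real (1 / sqrt a) \<cdot>\<^sub>m U"
  have Vc: "V \<in> carrier_mat m m" using Uc by (simp add: V_def)
  define \<gamma> where "\<gamma> = (of_real (t^2 * \<beta>^2) :: complex)"
  have gn: "\<gamma> \<noteq> 0" using t be by (simp add: \<gamma>_def)
  have q: "qv m V H i = \<gamma> * (if i = m' then 1 else 0)" if "i < m" for i
  proof -
    have "qv m V H i = of_real (1 / sqrt a) * qv m U H i" unfolding V_def by (rule qv_smult[OF Uc that])
    also have "qv m U H i = of_real \<beta> * (if i = m' then 1 else 0)" using Ub[OF that] by (simp add: qv_def bb_def)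
    finally show ?thesis unfolding sa by (simp add: \<gamma>_def power2_eq_square)
  qed
  define c where "c = vec m (\<lambda>i. - M$$(i,m') / (of_real a * \<gamma>) * (if i = m' then 1/2 else 1))"
  have adm: "admissible_params (Suc m) a V c d" unfolding V_def
    by (rule adm_U[OF a dn Uu]) (simp add: c_def)
  have VV: "(V * tlm m H * transpose_mat V) $$ (i,j) = of_real (1 / a) * M$$(i,j)" if "i < m" "j < m" for i j
    unfolding V_def VtriU[OF a Uc tlm_carrier] M_def using that Uc by simp
  define lam where "lam = map (\<lambda>i. if i < m' then l i else 0) [0..<Suc m']"
  have al: "admissible_lambda (Suc m) 1 lam" unfolding mm by (rule adm_lam1[OF nl lam_def])
  have lam_nth: "lam ! i = (if i < m' then l i else 0)" if "i < m" for i
    using that mm by (simp add: lam_def nth_map_upt del: upt_Suc)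
  have "act (Suc m) a V c d H = normal_form (Suc m) 1 lam"
  proof (rule eq_matI)
    fix i j assume "i < dim_row (normal_form (Suc m) 1 lam)" "j < dim_col (normal_form (Suc m) 1 lam)"
    hence ij: "i < Suc m" "j < Suc m" by (auto simp: normal_form_def)
    note e = act_entry[OF H sym ij Vc, of a c d]
    note nf = normal_form_entry[OF ij m, of 1 lam]
    show "act (Suc m) a V c d H $$ (i,j) = normal_form (Suc m) 1 lam $$ (i,j)"
    proof (cases "i < m \<and> j < m")
      case True
      have e2: "act (Suc m) a V c d H $$ (i,j) = of_real a * of_real t *
          (of_real (1 / a) * M$$(i,j) + c$i * qv m V H j + c$j * qv m V H i)"
        using e True h VV by (simp add: d_def)
      show ?thesis
      proof (cases "i < m' \<and> j < m'")
        case True2: True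
        have "act (Suc m) a V c d H $$ (i,j) = of_real t * M$$(i,j)"
          using e2 True2 q True a mm by simp
        also have "\<dots> = dg m' l $$ (i,j)" using D[symmetric] True2 U1c Min by simp
        also have "\<dots> = normal_form (Suc m) 1 lam $$ (i,j)" using nf True True2 lam_nth by simp
        finally show ?thesis .
      next
        case False2: False
        have z: "of_real (1 / a) * M$$(i,j) + c$i * qv m V H j + c$j * qv m V H i = 0"
        proof -
          have aa: "(of_real a :: complex) \<noteq> 0" using a by simp
          consider "i = m'" "j = m'" | "i = m'" "j < m'" | "i < m'" "j = m'" using False2 True mm by linarith
          then show ?thesis
          proof cases
            case 1 then show ?thesis using q True gn aa by (simp add: c_def field_simps)
          next
            case 2 then show ?thesis using q True gn aa Msym by (simp add: c_def field_simps)
          next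
            case 3 then show ?thesis using q True gn aa by (simp add: c_def field_simps)
          qed
        qed
        have "normal_form (Suc m) 1 lam $$ (i,j) = 0" using nf True False2 lam_nth mm by auto
        then show ?thesis using e2 z by simp
      qed
    next
      case False
      have "of_real a * cnj d * (d * (qv m V H i + c$i * H$$(m,m))) = (if i = m' then 1 else 0)" if "i < m" for i
      proof -
        have "of_real a * cnj d * (d * (qv m V H i + c$i * H$$(m,m))) = of_real (a * t^2) * \<gamma> * (if i = m' then 1 else 0)"
          using q[OF that] h by (simp add: d_def power2_eq_square)
        also have "of_real (a * t^2) * \<gamma> = of_real (a * t^2 * (t^2 * \<beta>^2))" by (simp only: \<gamma>_def of_real_mult)
        also have "a * t^2 * (t^2 * \<beta>^2) = 1" using t be t44 by (simp add: a_def field_simps)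
        hence "(of_real (a * t^2 * (t^2 * \<beta>^2)) :: complex) = 1" by simp
        finally show ?thesis by simp
      qed
      note r = this
      consider "i < m" "j = m" | "i = m" "j < m" | "i = m" "j = m" using False ij by linarith
      then show ?thesis
      proof cases
        case 1 then show ?thesis using e nf r[of i] mm by simp
      next
        case 2 then show ?thesis using e nf r[of j] mm by simp
      next
        case 3 then show ?thesis using e nf h by simp
      qed
    qed
  qed (auto simp: normal_form_def act_def)
  then show ?thesis using al adm by blast
qed

section \<open>Uniqueness of singular values\<close>

lemma ct_transpose: "conj_transpose (transpose_mat U) = map_mat cnj U"
  by (intro eq_matI) auto

lemma ct_sym: assumes "A \<in> carrier_mat m m" "\<forall>i<m. \<forall>j<m. A$$(i,j) = A$$(j,i)"
  shows "conj_transpose A = map_mat cnj A"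
  using assms by (intro eq_matI) auto

lemma ct_smult: "conj_transpose (z \<cdot>\<^sub>m X) = cnj z \<cdot>\<^sub>m conj_transpose X"
  by (intro eq_matI) auto

lemma unitary_ct_right: "unitary_mat m U \<Longrightarrow> U * conj_transpose U = 1\<^sub>m m"
  by (simp add: unitary_mat_def)

lemma unitary_ct_left: assumes "unitary_mat m U" shows "conj_transpose U * U = 1\<^sub>m m"
proof -
  have U: "U \<in> carrier_mat m m" using assms by (simp add: unitary_carrier)
  show ?thesis by (rule mat_mult_left_right_inverse[OF U _ unitary_ct_right[OF assms]]) (use U in auto)
qed

lemma unitary_TcU: assumes "unitary_mat m U" shows "transpose_mat U * map_mat cnj U = 1\<^sub>m m"
proof (rule eq_matI)
  have U: "U \<in> carrier_mat m m" using assms by (simp add: unitary_carrier)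
  fix i j assume "i < dim_row (1\<^sub>m m)" "j < dim_col (1\<^sub>m m)"
  hence ij: "i < m" "j < m" by auto
  have "(transpose_mat U * map_mat cnj U) $$ (i,j) = (\<Sum>k<m. U$$(k,i) * cnj (U$$(k,j)))"
    using U ij by (simp add: scalar_prod_def atLeast0LessThan)
  also have "\<dots> = cnj (\<Sum>k<m. cnj (U$$(k,i)) * U$$(k,j))" by simp
  also have "\<dots> = 1\<^sub>m m $$ (i,j)" using unitary_cols[OF assms ij] ij by simp
  finally show "(transpose_mat U * map_mat cnj U) $$ (i,j) = 1\<^sub>m m $$ (i,j)" .
qed (use unitary_carrier[OF assms] in auto)

lemma sv_similar:
  fixes A U :: "complex mat"
  assumes A: "A \<in> carrier_mat m m" and sym: "\<forall>i<m. \<forall>j<m. A$$(i,j) = A$$(j,i)"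
    and U: "unitary_mat m U" and z: "z \<noteq> 0" and D: "z \<cdot>\<^sub>m (U * A * transpose_mat U) = dg m l"
  shows "similar_mat (dg m (\<lambda>i. (l i)^2 / (cmod z)^2)) (A * map_mat cnj A)"
proof -
  have Uc: "U \<in> carrier_mat m m" using U by (simp add: unitary_carrier)
  define X where "X = U * A * transpose_mat U"
  have Xc: "X \<in> carrier_mat m m" using Uc A by (simp add: X_def)
  have ctX: "conj_transpose X = map_mat cnj U * (map_mat cnj A * conj_transpose U)"
  proof -
    have "conj_transpose X = conj_transpose (transpose_mat U) * conj_transpose (U * A)"
      unfolding X_def by (rule ct_mult[of _ m m _ m]) (use Uc A in auto)
    also have "conj_transpose (U * A) = conj_transpose A * conj_transpose U"
      by (rule ct_mult[of _ m m _ m]) (use Uc A in auto)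
    finally show ?thesis by (simp add: ct_transpose ct_sym[OF A sym])
  qed
  have TcU: "transpose_mat U * (map_mat cnj U * Y) = Y" if "Y \<in> carrier_mat m m" for Y
  proof -
    have "transpose_mat U * (map_mat cnj U * Y) = (transpose_mat U * map_mat cnj U) * Y"
      using Uc that by (simp add: assoc_mult_mat[of _ m m _ m _ m])
    then show ?thesis using unitary_TcU[OF U] that by simp
  qed
  have cU: "map_mat cnj U \<in> carrier_mat m m" "map_mat cnj A \<in> carrier_mat m m" "conj_transpose U \<in> carrier_mat m m"
    using Uc A ct_carrier[of U] by auto
  have XX: "X * conj_transpose X = U * (A * map_mat cnj A) * conj_transpose U"
  proof -
    have "X * conj_transpose X = X * (map_mat cnj U * (map_mat cnj A * conj_transpose U))" by (simp only: ctX)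
    also have "\<dots> = U * (A * (transpose_mat U * (map_mat cnj U * (map_mat cnj A * conj_transpose U))))"
      unfolding X_def using Uc A cU by (simp add: assoc_mult_mat[of _ m m _ m _ m])
    also have "transpose_mat U * (map_mat cnj U * (map_mat cnj A * conj_transpose U)) = map_mat cnj A * conj_transpose U"
      by (rule TcU) (use Uc A in auto)
    finally show ?thesis using Uc A cU by (simp add: assoc_mult_mat[of _ m m _ m _ m])
  qed
  have DD: "dg m l * conj_transpose (dg m l) = dg m (\<lambda>i. (l i)^2)"
  proof (rule eq_matI)
    fix i j assume "i < dim_row (dg m (\<lambda>i. (l i)^2))" "j < dim_col (dg m (\<lambda>i. (l i)^2))"
    hence ij: "i < m" "j < m" by (auto simp: dg_def)
    have "(dg m l * conj_transpose (dg m l)) $$ (i,j) = (\<Sum>k<m. dg m l$$(i,k) * cnj (dg m l$$(j,k)))"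
      using ij by (simp add: scalar_prod_def atLeast0LessThan dg_def)
    also have "\<dots> = (\<Sum>k<m. if k = i then (if j = i then complex_of_real ((l i)^2) else 0) else 0)"
      using ij by (intro sum.cong refl) (auto simp: power2_eq_square)
    also have "\<dots> = dg m (\<lambda>i. (l i)^2) $$ (i,j)" using ij by auto
    finally show "(dg m l * conj_transpose (dg m l)) $$ (i,j) = dg m (\<lambda>i. (l i)^2) $$ (i,j)" .
  qed (auto simp: dg_def)
  have "dg m l * conj_transpose (dg m l) = (z * cnj z) \<cdot>\<^sub>m (X * conj_transpose X)"
  proof -
    have cX: "conj_transpose X \<in> carrier_mat m m" using Xc ct_carrier[of X] by simp
    have "dg m l * conj_transpose (dg m l) = (z \<cdot>\<^sub>m X) * (cnj z \<cdot>\<^sub>m conj_transpose X)"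
      unfolding D[symmetric] X_def[symmetric] ct_smult ..
    also have "\<dots> = z \<cdot>\<^sub>m (X * (cnj z \<cdot>\<^sub>m conj_transpose X))"
      by (rule mult_smult_assoc_mat[OF Xc, of _ m]) (use cX in simp)
    also have "X * (cnj z \<cdot>\<^sub>m conj_transpose X) = cnj z \<cdot>\<^sub>m (X * conj_transpose X)"
      by (rule mult_smult_distrib[OF Xc cX])
    finally show ?thesis by (auto intro!: eq_matI)
  qed
  hence E: "(z * cnj z) \<cdot>\<^sub>m (X * conj_transpose X) = dg m (\<lambda>i. (l i)^2)" using DD by simp
  have zz: "z * cnj z = of_real ((cmod z)^2)" by (metis complex_norm_square)
  have zn: "cmod z \<noteq> 0" using z by simp
  have "X * conj_transpose X = dg m (\<lambda>i. (l i)^2 / (cmod z)^2)"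
  proof (rule eq_matI)
    fix i j assume "i < dim_row (dg m (\<lambda>i. (l i)^2 / (cmod z)^2))" "j < dim_col (dg m (\<lambda>i. (l i)^2 / (cmod z)^2))"
    hence ij: "i < m" "j < m" by (auto simp: dg_def)
    have "((z * cnj z) \<cdot>\<^sub>m (X * conj_transpose X)) $$ (i,j) = dg m (\<lambda>i. (l i)^2) $$ (i,j)" using E by simp
    hence "of_real ((cmod z)^2) * (X * conj_transpose X) $$ (i,j) = dg m (\<lambda>i. (l i)^2) $$ (i,j)"
      using ij Xc zz by simp
    then show "(X * conj_transpose X) $$ (i,j) = dg m (\<lambda>i. (l i)^2 / (cmod z)^2) $$ (i,j)"
      using ij zn by (auto simp: field_simps)
  qed (use Xc in \<open>auto simp: dg_def\<close>)
  with XX have Eq: "dg m (\<lambda>i. (l i)^2 / (cmod z)^2) = U * (A * map_mat cnj A) * conj_transpose U" by simp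
  show ?thesis
    by (rule similar_matI[where n=m and P=U and Q="conj_transpose U"]) (use Uc A Eq unitary_ct_right[OF U] unitary_ct_left[OF U] in auto)
qed

lemma char_poly_dg: "char_poly (dg m f) = (\<Prod>a\<leftarrow>map (\<lambda>i. complex_of_real (f i)) [0..<m]. [:-a, 1:])"
proof -
  have ut: "upper_triangular (dg m f)" by (auto simp: upper_triangular_def dg_def)
  have "diag_mat (dg m f) = map (\<lambda>i. complex_of_real (f i)) [0..<m]"
    by (auto simp: diag_mat_def dg_def intro!: map_cong)
  then show ?thesis using char_poly_upper_triangular[OF dg_carrier ut] by simp
qed

lemma proots_lin: "proots (\<Prod>a\<leftarrow>xs. [:-a, 1:]) = mset (xs :: complex list)"
proof (induction xs)
  case Nil then show ?case by simp
next
  case (Cons a xs)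
  have e: "(\<Prod>b\<leftarrow>a#xs. [:-b, 1:]) = [:-a, 1:] * (\<Prod>b\<leftarrow>xs. [:-b, 1:])"
    by (simp only: prod_list.Cons list.map)
  have nz: "(\<Prod>b\<leftarrow>xs. [:-b, 1:]) \<noteq> (0 :: complex poly)" by (auto simp: prod_list_zero_iff)
  have nz2: "[:-a, 1:] \<noteq> (0 :: complex poly)" by simp
  have p1: "proots [:-a, 1:] = {#a#}" by simp
  show ?case unfolding e proots_mult[OF nz2 nz] p1 Cons.IH by simp
qed

lemma mset_mono_eq:
  fixes f g :: "nat \<Rightarrow> real"
  assumes ms: "mset (map f [0..<m]) = mset (map g [0..<m])"
    and mf: "\<forall>i j. i \<le> j \<longrightarrow> j < m \<longrightarrow> f j \<le> f i" and mg: "\<forall>i j. i \<le> j \<longrightarrow> j < m \<longrightarrow> g j \<le> g i"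
  shows "\<forall>i<m. f i = g i"
proof -
  have srt: "sorted (rev (map h [0..<m]))" if "\<forall>i j. i \<le> j \<longrightarrow> j < m \<longrightarrow> h j \<le> h i" for h :: "nat \<Rightarrow> real"
    unfolding sorted_iff_nth_mono using that by (auto simp: rev_nth)
  have "sort (rev (map g [0..<m])) = rev (map f [0..<m])"
    by (rule properties_for_sort) (use ms srt[OF mf] in auto)
  moreover have "sort (rev (map g [0..<m])) = rev (map g [0..<m])"
    using srt[OF mg] by (rule sorted_sort_id)
  ultimately have "map f [0..<m] = map g [0..<m]" by simp
  then show ?thesis by (simp add: map_eq_conv)
qed

lemma norm_mono: "normalized m l \<Longrightarrow> (\<forall>i j. i \<le> j \<longrightarrow> j < m \<longrightarrow> l j \<le> l i) \<and> (\<forall>i<m. 0 \<le> l i)"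
  unfolding normalized_def by (metis le_less_trans order_refl)

lemma sv_unique:
  fixes A U1 U2 :: "complex mat"
  assumes A: "A \<in> carrier_mat m m" and sym: "\<forall>i<m. \<forall>j<m. A$$(i,j) = A$$(j,i)"
    and U1: "unitary_mat m U1" and z1: "z1 \<noteq> 0" and D1: "z1 \<cdot>\<^sub>m (U1 * A * transpose_mat U1) = dg m l1"
    and U2: "unitary_mat m U2" and z2: "z2 \<noteq> 0" and D2: "z2 \<cdot>\<^sub>m (U2 * A * transpose_mat U2) = dg m l2"
    and n1: "normalized m l1" and n2: "normalized m l2"
  shows "\<forall>i<m. l1 i = l2 i"
proof -
  define f1 where "f1 i = (l1 i)^2 / (cmod z1)^2" for i
  define f2 where "f2 i = (l2 i)^2 / (cmod z2)^2" for i
  have "char_poly (dg m f1) = char_poly (A * map_mat cnj A)"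
    using char_poly_similar[OF sv_similar[OF A sym U1 z1 D1]] by (simp add: f1_def[abs_def])
  moreover have "char_poly (dg m f2) = char_poly (A * map_mat cnj A)"
    using char_poly_similar[OF sv_similar[OF A sym U2 z2 D2]] by (simp add: f2_def[abs_def])
  ultimately have "char_poly (dg m f1) = char_poly (dg m f2)" by simp
  then have "mset (map (\<lambda>i. complex_of_real (f1 i)) [0..<m]) = mset (map (\<lambda>i. complex_of_real (f2 i)) [0..<m])"
    unfolding char_poly_dg by (metis proots_lin)
  then have "image_mset Re (mset (map (\<lambda>i. complex_of_real (f1 i)) [0..<m])) = image_mset Re (mset (map (\<lambda>i. complex_of_real (f2 i)) [0..<m]))"
    by simp
  then have ms: "mset (map f1 [0..<m]) = mset (map f2 [0..<m])" by (simp add: mset_map[symmetric] o_def del: mset_map)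
  have mono: "\<forall>i j. i \<le> j \<longrightarrow> j < m \<longrightarrow> (l j)^2 / c \<le> (l i)^2 / c"
    if "normalized m l" "c > 0" for l :: "nat \<Rightarrow> real" and c
    using norm_mono[OF that(1)] that(2) by (auto intro!: divide_right_mono power_mono)
  have c1: "(cmod z1)^2 > 0" "(cmod z2)^2 > 0" using z1 z2 by auto
  have eq: "\<forall>i<m. f1 i = f2 i"
    by (rule mset_mono_eq[OF ms]) (use mono[OF n1 c1(1)] mono[OF n2 c1(2)] in \<open>auto simp: f1_def f2_def\<close>)
  define r where "r = cmod z2 / cmod z1"
  have r: "r > 0" using z1 z2 by (simp add: r_def)
  have l2r: "l2 i = r * l1 i" if i: "i < m" for i
  proof -
    have "(l2 i)^2 = (r * l1 i)^2"
      using eq i z1 z2 by (simp add: f1_def f2_def r_def field_simps power2_eq_square)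
    moreover have "l2 i \<ge> 0" "r * l1 i \<ge> 0" using norm_mono[OF n1] norm_mono[OF n2] i r by auto
    ultimately show ?thesis by (metis power2_eq_iff_nonneg)
  qed
  show ?thesis
  proof (cases "\<forall>i<m. l1 i = 0")
    case True then show ?thesis using l2r by simp
  next
    case False
    then obtain i0 where i0: "i0 < m" "l1 i0 \<noteq> 0" by auto
    have l10: "l1 0 = 1" using n1 False by (auto simp: normalized_def)
    have "\<not> (\<forall>i<m. l2 i = 0)" using l2r[of i0] i0 r by auto
    then have "l2 0 = 1" using n2 by (auto simp: normalized_def)
    then have "r = 1" using l2r[of 0] l10 i0 by simp
    then show ?thesis using l2r by simp
  qed
qed

definition kind :: "nat \<Rightarrow> complex mat \<Rightarrow> nat" where
  "kind m H = (if H$$(m,m) \<noteq> 0 then 3 else if \<exists>k<m. H$$(k,m) \<noteq> 0 then 1 else 2)"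

lemma qzero:
  assumes U: "unitary_mat m U" and q: "\<forall>i<m. qv m U H i = 0" and j: "j < m"
  shows "H$$(j,m) = 0"
proof -
  have "(\<Sum>i<m. cnj (U$$(i,j)) * qv m U H i) = (\<Sum>i<m. \<Sum>k<m. cnj (U$$(i,j)) * U$$(i,k) * H$$(k,m))"
    by (simp add: qv_def sum_distrib_left ac_simps)
  also have "\<dots> = (\<Sum>k<m. \<Sum>i<m. cnj (U$$(i,j)) * U$$(i,k) * H$$(k,m))" by (rule sum.swap)
  also have "\<dots> = (\<Sum>k<m. (\<Sum>i<m. cnj (U$$(i,j)) * U$$(i,k)) * H$$(k,m))" by (simp add: sum_distrib_right)
  also have "\<dots> = (\<Sum>k<m. (if j = k then 1 else 0) * H$$(k,m))"
    using unitary_cols[OF U j] by simp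
  also have "\<dots> = H$$(j,m)" using j by (rule sum_delta_l)
  finally show ?thesis using q by simp
qed

lemma analysis:
  fixes H V :: "complex mat"
  assumes H: "H \<in> carrier_mat (Suc m) (Suc m)" and sym: "\<forall>i<Suc m. \<forall>j<Suc m. H$$(i,j) = H$$(j,i)"
    and m: "0 < m" and adm: "admissible_params (Suc m) a V c d"
    and eq: "act (Suc m) a V c d H = normal_form (Suc m) k lam" and k: "k \<in> {1,2,3}"
  defines "U \<equiv> of_real (sqrt a) \<cdot>\<^sub>m V"
  shows "unitary_mat m U" "d \<noteq> 0" "k = kind m H"
    "k = 3 \<Longrightarrow> dg m (\<lambda>i. lam ! i) = cnj d \<cdot>\<^sub>m (U * Ap m H * transpose_mat U)"
    "k = 2 \<Longrightarrow> dg m (\<lambda>i. lam ! i) = cnj d \<cdot>\<^sub>m (U * tlm m H * transpose_mat U)"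
    "k = 1 \<Longrightarrow> (\<forall>i<m - 1. qv m U H i = 0) \<and> qv m U H (m - 1) \<noteq> 0 \<and>
        (\<forall>i<m - 1. \<forall>j<m - 1. cnj d * (U * tlm m H * transpose_mat U) $$ (i,j) = (if i = j then complex_of_real (lam ! i) else 0))"
proof -
  have a: "a > 0" and dn: "d \<noteq> 0" and Vc: "V \<in> carrier_mat m m" and Uu: "unitary_mat m U"
    using adm by (auto simp: admissible_params_def U_def)
  show "unitary_mat m U" "d \<noteq> 0" using Uu dn by auto
  have Uc: "U \<in> carrier_mat m m" using Uu by (simp add: unitary_carrier)
  have VU: "V = of_real (1 / sqrt a) \<cdot>\<^sub>m U"
    using Vc a by (intro eq_matI) (auto simp: U_def simp flip: of_real_mult)
  have qVU: "qv m V H i = of_real (1 / sqrt a) * qv m U H i" if "i < m" for i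
    unfolding VU by (rule qv_smult[OF Uc that])
  have VV: "(V * X * transpose_mat V) $$ (i,j) = of_real (1 / a) * (U * X * transpose_mat U) $$ (i,j)"
    if "X \<in> carrier_mat m m" "i < m" "j < m" for X i j
    unfolding VU VtriU[OF a Uc that(1)] using that Uc by simp
  define h where "h = H$$(m,m)"
  have ent: "act (Suc m) a V c d H $$ (i,j) = normal_form (Suc m) k lam $$ (i,j)" for i j using eq by simp
  have E: "of_real a * cnj d * (if i < m \<and> j < m then (V * tlm m H * transpose_mat V) $$ (i,j) + c$i * qv m V H j + c$j * qv m V H i
        + c$i * c$j * h
     else if i < m then d * (qv m V H i + c$i * h)
     else if j < m then d * (qv m V H j + c$j * h)
     else d * d * h) =
    (if i < m \<and> j < m then (if i = j then complex_of_real (lam ! i) else 0)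
     else if i < m then (if k = 1 \<and> i = m - 1 then 1 else 0)
     else if j < m then (if k = 1 \<and> j = m - 1 then 1 else 0)
     else (if k = 3 then 1 else 0))" if "i < Suc m" "j < Suc m" for i j
    using ent[of i j] by (simp only: act_entry[OF H sym that Vc] normal_form_entry[OF that m] h_def)
  have ad: "of_real a * cnj d * d \<noteq> 0" using a dn by simp
  have corner: "of_real a * cnj d * (d * d * h) = (if k = 3 then 1 else 0)" using E[of m m] by simp
  have col: "of_real a * cnj d * (d * (qv m V H i + c$i * h)) = (if k = 1 \<and> i = m - 1 then 1 else 0)"
    if "i < m" for i using E[of i m] that by simp
  have tl: "of_real a * cnj d * ((V * tlm m H * transpose_mat V) $$ (i,j) + c$i * qv m V H j + c$j * qv m V H i
        + c$i * c$j * h) = (if i = j then complex_of_real (lam ! i) else 0)"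
    if "i < m" "j < m" for i j using E[of i j] that by simp
  have k3: "k = 3 \<longleftrightarrow> h \<noteq> 0"
  proof
    assume "k = 3" then show "h \<noteq> 0" using corner by auto
  next
    assume "h \<noteq> 0" then have "of_real a * cnj d * (d * d * h) \<noteq> 0" using a dn by simp
    then show "k = 3" using corner by (auto split: if_splits)
  qed
  have m1: "m - 1 < m" using m by simp
  show kk: "k = kind m H"
  proof (cases "h \<noteq> 0")
    case True then show ?thesis using k3 by (simp add: kind_def h_def)
  next
    case False
    then have h0: "h = 0" by simp
    have colh: "of_real a * cnj d * d * qv m V H i = (if k = 1 \<and> i = m - 1 then 1 else 0)" if "i < m" for i
      using col[OF that] h0 by (simp add: ac_simps)
    show ?thesis
    proof (cases "\<exists>k<m. H$$(k,m) \<noteq> 0")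
      case True
      have "k = 1"
      proof (rule ccontr)
        assume "k \<noteq> 1"
        then have "\<forall>i<m. qv m V H i = 0" using colh ad by auto
        then have "\<forall>i<m. qv m U H i = 0" using qVU a by auto
        then show False using qzero[OF Uu] True by blast
      qed
      then show ?thesis using True h0 by (simp add: kind_def h_def)
    next
      case False
      then have "qv m V H (m - 1) = 0" by (simp add: qv_def)
      then have "k \<noteq> 1" using colh[OF m1] by auto
      then show ?thesis using False h0 k k3 by (auto simp: kind_def h_def)
    qed
  qed
  show "k = 3 \<Longrightarrow> dg m (\<lambda>i. lam ! i) = cnj d \<cdot>\<^sub>m (U * Ap m H * transpose_mat U)"
  proof -
    assume k3': "k = 3"
    then have hn: "h \<noteq> 0" using k3 by simp
    have ci: "c$i = - qv m V H i / h" if "i < m" for i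
    proof -
      have "of_real a * cnj d * d * (qv m V H i + c$i * h) = 0" using col[OF that] k3' by (simp add: ac_simps)
      then have "qv m V H i + c$i * h = 0" using ad by simp
      then show ?thesis using hn by (simp add: field_simps add_eq_0_iff)
    qed
    show ?thesis
    proof (rule eq_matI)
      fix i j assume "i < dim_row (cnj d \<cdot>\<^sub>m (U * Ap m H * transpose_mat U))" "j < dim_col (cnj d \<cdot>\<^sub>m (U * Ap m H * transpose_mat U))"
      hence ij: "i < m" "j < m" using Uc by auto
      have "(V * tlm m H * transpose_mat V) $$ (i,j) + c$i * qv m V H j + c$j * qv m V H i + c$i * c$j * h
         = (V * tlm m H * transpose_mat V) $$ (i,j) - qv m V H i * qv m V H j / h"
        using hn unfolding ci[OF ij(1)] ci[OF ij(2)] by (simp add: field_simps power2_eq_square)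
      also have "\<dots> = (V * Ap m H * transpose_mat V) $$ (i,j)"
        using bracket[OF Vc ij, of H] by (simp add: h_def)
      also have "\<dots> = of_real (1 / a) * (U * Ap m H * transpose_mat U) $$ (i,j)" by (rule VV[OF Ap_carrier ij])
      finally have "dg m (\<lambda>i. lam ! i) $$ (i,j) = of_real a * cnj d * (of_real (1 / a) * (U * Ap m H * transpose_mat U) $$ (i,j))"
        using tl[OF ij] ij by simp
      also have "\<dots> = cnj d * (U * Ap m H * transpose_mat U) $$ (i,j)" using a by simp
      finally show "dg m (\<lambda>i. lam ! i) $$ (i,j) = (cnj d \<cdot>\<^sub>m (U * Ap m H * transpose_mat U)) $$ (i,j)"
        using ij Uc by simp
    qed (use Uc in \<open>auto simp: dg_def\<close>)
  qed
  show "k = 2 \<Longrightarrow> dg m (\<lambda>i. lam ! i) = cnj d \<cdot>\<^sub>m (U * tlm m H * transpose_mat U)"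
  proof -
    assume k2: "k = 2"
    then have h0: "h = 0" using k3 by simp
    have "\<not> (\<exists>k<m. H$$(k,m) \<noteq> 0)" using kk k2 h0 by (auto simp: kind_def h_def split: if_splits)
    then have q0: "qv m V H i = 0" for i by (simp add: qv_def)
    show ?thesis
    proof (rule eq_matI)
      fix i j assume "i < dim_row (cnj d \<cdot>\<^sub>m (U * tlm m H * transpose_mat U))" "j < dim_col (cnj d \<cdot>\<^sub>m (U * tlm m H * transpose_mat U))"
      hence ij: "i < m" "j < m" using Uc by auto
      have "dg m (\<lambda>i. lam ! i) $$ (i,j) = of_real a * cnj d * (of_real (1 / a) * (U * tlm m H * transpose_mat U) $$ (i,j))"
        using tl[OF ij] ij q0 h0 VV[OF tlm_carrier ij] by simp
      also have "\<dots> = cnj d * (U * tlm m H * transpose_mat U) $$ (i,j)" using a by simp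
      finally show "dg m (\<lambda>i. lam ! i) $$ (i,j) = (cnj d \<cdot>\<^sub>m (U * tlm m H * transpose_mat U)) $$ (i,j)"
        using ij Uc by simp
    qed (use Uc in \<open>auto simp: dg_def\<close>)
  qed
  show "k = 1 \<Longrightarrow> (\<forall>i<m - 1. qv m U H i = 0) \<and> qv m U H (m - 1) \<noteq> 0 \<and>
        (\<forall>i<m - 1. \<forall>j<m - 1. cnj d * (U * tlm m H * transpose_mat U) $$ (i,j) = (if i = j then complex_of_real (lam ! i) else 0))"
  proof -
    assume k1: "k = 1"
    then have h0: "h = 0" using k3 by simp
    have colh: "of_real a * cnj d * d * qv m V H i = (if i = m - 1 then 1 else 0)" if "i < m" for i
      using col[OF that] h0 k1 by (simp add: ac_simps)
    have qV0: "qv m V H i = 0" if "i < m - 1" for i using colh[of i] that ad by auto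
    have qVn: "qv m V H (m - 1) \<noteq> 0" using colh[OF m1] by auto
    have sa: "sqrt a \<noteq> 0" using a by simp
    have "\<forall>i<m - 1. qv m U H i = 0" using qV0 qVU sa by auto
    moreover have "qv m U H (m - 1) \<noteq> 0" using qVn qVU[OF m1] sa by auto
    moreover have "\<forall>i<m - 1. \<forall>j<m - 1. cnj d * (U * tlm m H * transpose_mat U) $$ (i,j) = (if i = j then complex_of_real (lam ! i) else 0)"
    proof (intro allI impI)
      fix i j assume ij': "i < m - 1" "j < m - 1"
      hence ij: "i < m" "j < m" by auto
      have "(if i = j then complex_of_real (lam ! i) else 0) = of_real a * cnj d * (of_real (1 / a) * (U * tlm m H * transpose_mat U) $$ (i,j))"
        using tl[OF ij] qV0 ij' h0 VV[OF tlm_carrier ij] by simp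
      also have "\<dots> = cnj d * (U * tlm m H * transpose_mat U) $$ (i,j)" using a by simp
      finally show "cnj d * (U * tlm m H * transpose_mat U) $$ (i,j) = (if i = j then complex_of_real (lam ! i) else 0)" by simp
    qed
    ultimately show ?thesis by blast
  qed
qed

section \<open>Uniqueness in the case k = 1\<close>

lemma qinv:
  assumes U: "unitary_mat m U" and j: "j < m"
  shows "(\<Sum>i<m. cnj (U$$(i,j)) * qv m U H i) = H$$(j,m)"
proof -
  have "(\<Sum>i<m. cnj (U$$(i,j)) * qv m U H i) = (\<Sum>i<m. \<Sum>k<m. cnj (U$$(i,j)) * U$$(i,k) * H$$(k,m))"
    by (simp add: qv_def sum_distrib_left ac_simps)
  also have "\<dots> = (\<Sum>k<m. \<Sum>i<m. cnj (U$$(i,j)) * U$$(i,k) * H$$(k,m))" by (rule sum.swap)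
  also have "\<dots> = (\<Sum>k<m. (\<Sum>i<m. cnj (U$$(i,j)) * U$$(i,k)) * H$$(k,m))" by (simp add: sum_distrib_right)
  also have "\<dots> = (\<Sum>k<m. (if j = k then 1 else 0) * H$$(k,m))"
    using unitary_cols[OF U j] by simp
  also have "\<dots> = H$$(j,m)" using j by (rule sum_delta_l)
  finally show ?thesis .
qed

lemma tl_tri:
  fixes W X :: "complex mat"
  assumes W: "W \<in> carrier_mat (Suc m) (Suc m)" and X: "X \<in> carrier_mat (Suc m) (Suc m)"
    and W0: "\<forall>i<m. W$$(i,m) = 0" and ij: "i < m" "j < m"
  shows "(W * X * transpose_mat W) $$ (i,j) = (tlm m W * tlm m X * transpose_mat (tlm m W)) $$ (i,j)"
proof -
  have "(W * X * transpose_mat W) $$ (i,j) = (\<Sum>k<Suc m. \<Sum>l<Suc m. W$$(i,k) * X$$(k,l) * W$$(j,l))"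
    using W X ij by (intro tri) auto
  also have "\<dots> = (\<Sum>k<m. \<Sum>l<m. W$$(i,k) * X$$(k,l) * W$$(j,l))
     + (\<Sum>k<m. W$$(i,k) * X$$(k,m) * W$$(j,m))
     + (\<Sum>l<m. W$$(i,m) * X$$(m,l) * W$$(j,l))
     + W$$(i,m) * X$$(m,m) * W$$(j,m)" by (rule sum2_Suc)
  also have "\<dots> = (\<Sum>k<m. \<Sum>l<m. tlm m W$$(i,k) * tlm m X$$(k,l) * tlm m W$$(j,l))"
    using W0 ij by simp
  also have "\<dots> = (tlm m W * tlm m X * transpose_mat (tlm m W)) $$ (i,j)"
    using ij by (intro tri[symmetric]) auto
  finally show ?thesis .
qed

lemma transpose_ct: "transpose_mat (conj_transpose U) = map_mat cnj U"
  by (intro eq_matI) auto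

lemma uniq1:
  fixes H U1 U2 :: "complex mat"
  assumes U1: "unitary_mat (Suc m) U1" and U2: "unitary_mat (Suc m) U2" and d1: "d1 \<noteq> 0" and d2: "d2 \<noteq> 0"
    and Q1: "\<forall>i<m. qv (Suc m) U1 H i = 0" and Q1': "qv (Suc m) U1 H m \<noteq> 0" and Q2: "\<forall>i<m. qv (Suc m) U2 H i = 0"
    and T1: "\<forall>i<m. \<forall>j<m. cnj d1 * (U1 * tlm (Suc m) H * transpose_mat U1) $$ (i,j) = (if i = j then complex_of_real (lam1 ! i) else 0)"
    and T2: "\<forall>i<m. \<forall>j<m. cnj d2 * (U2 * tlm (Suc m) H * transpose_mat U2) $$ (i,j) = (if i = j then complex_of_real (lam2 ! i) else 0)"
    and n1: "normalized m (\<lambda>i. lam1 ! i)" and n2: "normalized m (\<lambda>i. lam2 ! i)"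
  shows "\<forall>i<m. lam1 ! i = lam2 ! i"
proof -
  let ?M = "Suc m"
  let ?T = "tlm ?M H"
  have U1c: "U1 \<in> carrier_mat ?M ?M" and U2c: "U2 \<in> carrier_mat ?M ?M" using U1 U2 by (auto simp: unitary_carrier)
  define W where "W = U2 * conj_transpose U1"
  have Wu: "unitary_mat ?M W" unfolding W_def by (rule unitary_mult[OF U2 unitary_ct[OF U1]])
  have Wc: "W \<in> carrier_mat ?M ?M" using Wu by (simp add: unitary_carrier)
  have bj: "H$$(j,?M) = cnj (U1$$(m,j)) * qv ?M U1 H m" if j: "j < ?M" for j
  proof -
    have "H$$(j,?M) = (\<Sum>i<?M. cnj (U1$$(i,j)) * qv ?M U1 H i)" using qinv[OF U1 j] by simp
    also have "\<dots> = cnj (U1$$(m,j)) * qv ?M U1 H m" using Q1 by simp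
    finally show ?thesis .
  qed
  have W0: "\<forall>i<m. W$$(i,m) = 0"
  proof (intro allI impI)
    fix i assume i: "i < m"
    have Wim: "W$$(i,m) = (\<Sum>j<?M. U2$$(i,j) * cnj (U1$$(m,j)))"
      using i U1c U2c by (simp add: W_def scalar_prod_def atLeast0LessThan del: sum.lessThan_Suc)
    have "W$$(i,m) * qv ?M U1 H m = (\<Sum>j<?M. U2$$(i,j) * cnj (U1$$(m,j)) * qv ?M U1 H m)"
      unfolding Wim by (rule sum_distrib_right)
    also have "\<dots> = (\<Sum>j<?M. U2$$(i,j) * (cnj (U1$$(m,j)) * qv ?M U1 H m))"
      by (simp add: mult.assoc)
    also have "\<dots> = (\<Sum>j<?M. U2$$(i,j) * H$$(j,?M))"
      by (intro sum.cong refl) (simp add: bj)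
    also have "\<dots> = qv ?M U2 H i" by (simp add: qv_def)
    also have "\<dots> = 0" using Q2 i by simp
    finally show "W$$(i,m) = 0" using Q1' by simp
  qed
  define W' where "W' = tlm m W"
  have W'u: "unitary_mat m W'" unfolding unitary_iff
  proof (intro conjI allI impI)
    show "W' \<in> carrier_mat m m" by (simp add: W'_def)
    fix i j assume ij: "i < m" "j < m"
    have "(\<Sum>k<m. W'$$(i,k) * cnj (W'$$(j,k))) = (\<Sum>k<?M. W$$(i,k) * cnj (W$$(j,k)))"
      using ij W0 by (simp add: W'_def)
    also have "\<dots> = (if i = j then 1 else 0)" using unitary_rows[OF Wu, of i j] ij by simp
    finally show "(\<Sum>k<m. W'$$(i,k) * cnj (W'$$(j,k))) = (if i = j then 1 else 0)" .
  qed
  have W'c: "W' \<in> carrier_mat m m" by (simp add: W'_def)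
  define X1 where "X1 = U1 * ?T * transpose_mat U1"
  define X2 where "X2 = U2 * ?T * transpose_mat U2"
  have X1c: "X1 \<in> carrier_mat ?M ?M" unfolding X1_def using U1c by (auto intro!: mult_carrier_mat)
  have cU1: "conj_transpose U1 \<in> carrier_mat ?M ?M" "map_mat cnj U1 \<in> carrier_mat ?M ?M" using U1c ct_carrier[of U1] by auto
  have L1: "conj_transpose U1 * (U1 * Y) = Y" if "Y \<in> carrier_mat ?M ?M" for Y
  proof -
    have "conj_transpose U1 * (U1 * Y) = (conj_transpose U1 * U1) * Y"
      using U1c cU1 that by (simp add: assoc_mult_mat[of _ ?M ?M _ ?M _ ?M])
    then show ?thesis using unitary_ct_left[OF U1] that by simp
  qed
  have L2: "transpose_mat U1 * (map_mat cnj U1 * Y) = Y" if "Y \<in> carrier_mat ?M ?M" for Y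
  proof -
    have "transpose_mat U1 * (map_mat cnj U1 * Y) = (transpose_mat U1 * map_mat cnj U1) * Y"
      using U1c cU1 that by (simp add: assoc_mult_mat[of _ ?M ?M _ ?M _ ?M])
    then show ?thesis using unitary_TcU[OF U1] that by simp
  qed
  have XX: "W * X1 * transpose_mat W = X2"
  proof -
    have tW: "transpose_mat W = map_mat cnj U1 * transpose_mat U2"
      unfolding W_def transpose_mult[OF U2c cU1(1)] transpose_ct ..
    have "W * X1 * transpose_mat W = W * X1 * (map_mat cnj U1 * transpose_mat U2)" by (simp only: tW)
    also have "\<dots> = U2 * (conj_transpose U1 * (U1 * (?T * (transpose_mat U1 * (map_mat cnj U1 * transpose_mat U2)))))"
      unfolding W_def X1_def using U1c U2c cU1 by (simp add: assoc_mult_mat[of _ ?M ?M _ ?M _ ?M] mult_carrier_mat[of _ ?M ?M _ ?M])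
    also have "transpose_mat U1 * (map_mat cnj U1 * transpose_mat U2) = transpose_mat U2"
      by (rule L2) (use U2c in simp)
    also have "conj_transpose U1 * (U1 * (?T * transpose_mat U2)) = ?T * transpose_mat U2"
      by (rule L1) (use U2c in \<open>auto intro!: mult_carrier_mat\<close>)
    finally show ?thesis unfolding X2_def using U2c by (simp add: assoc_mult_mat[of _ ?M ?M _ ?M _ ?M])
  qed
  define D1 where "D1 = dg m (\<lambda>i. lam1 ! i)"
  have X1D: "cnj d1 * X1$$(k,l) = D1$$(k,l)" if "k < m" "l < m" for k l
    using T1 that by (simp add: X1_def D1_def)
  have eq2: "(cnj d2 / cnj d1) \<cdot>\<^sub>m (W' * D1 * transpose_mat W') = dg m (\<lambda>i. lam2 ! i)"
  proof (rule eq_matI)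
    fix i j assume "i < dim_row (dg m (\<lambda>i. lam2 ! i))" "j < dim_col (dg m (\<lambda>i. lam2 ! i))"
    hence ij: "i < m" "j < m" by (auto simp: dg_def)
    have "(W' * D1 * transpose_mat W') $$ (i,j) = (\<Sum>k<m. \<Sum>l<m. W'$$(i,k) * D1$$(k,l) * W'$$(j,l))"
      using ij W'c by (intro tri) (auto simp: D1_def)
    also have "\<dots> = (\<Sum>k<m. \<Sum>l<m. cnj d1 * (W'$$(i,k) * tlm m X1$$(k,l) * W'$$(j,l)))"
    proof (intro sum.cong refl)
      fix k l assume kl: "k \<in> {..<m}" "l \<in> {..<m}"
      then have "D1$$(k,l) = cnj d1 * tlm m X1$$(k,l)" using X1D[of k l] by simp
      then show "W'$$(i,k) * D1$$(k,l) * W'$$(j,l) = cnj d1 * (W'$$(i,k) * tlm m X1$$(k,l) * W'$$(j,l))"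
        by (simp only: ac_simps)
    qed
    also have "\<dots> = cnj d1 * (\<Sum>k<m. \<Sum>l<m. W'$$(i,k) * tlm m X1$$(k,l) * W'$$(j,l))"
      by (simp only: sum_distrib_left)
    also have "(\<Sum>k<m. \<Sum>l<m. W'$$(i,k) * tlm m X1$$(k,l) * W'$$(j,l)) = X2 $$ (i,j)"
    proof -
      have "(\<Sum>k<m. \<Sum>l<m. W'$$(i,k) * tlm m X1$$(k,l) * W'$$(j,l)) = (W' * tlm m X1 * transpose_mat W') $$ (i,j)"
        using ij W'c by (intro tri[symmetric]) auto
      also have "\<dots> = (W * X1 * transpose_mat W) $$ (i,j)" using tl_tri[OF Wc X1c W0 ij] by (simp add: W'_def)
      finally show ?thesis using XX by simp
    qed
    finally have e: "(W' * D1 * transpose_mat W') $$ (i,j) = cnj d1 * X2 $$ (i,j)" .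
    have "((cnj d2 / cnj d1) \<cdot>\<^sub>m (W' * D1 * transpose_mat W')) $$ (i,j) = cnj d2 * X2 $$ (i,j)"
      using ij W'c e d1 by (simp add: D1_def)
    also have "\<dots> = dg m (\<lambda>i. lam2 ! i) $$ (i,j)" using T2 ij by (simp add: X2_def)
    finally show "((cnj d2 / cnj d1) \<cdot>\<^sub>m (W' * D1 * transpose_mat W')) $$ (i,j) = dg m (\<lambda>i. lam2 ! i) $$ (i,j)" .
  qed (use W'c in \<open>auto simp: D1_def dg_def\<close>)
  have eq1: "1 \<cdot>\<^sub>m (1\<^sub>m m * D1 * transpose_mat (1\<^sub>m m)) = dg m (\<lambda>i. lam1 ! i)"
    by (intro eq_matI) (auto simp: D1_def dg_def)
  have Dsym: "\<forall>i<m. \<forall>j<m. D1$$(i,j) = D1$$(j,i)" by (simp add: D1_def)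
  have zn: "cnj d2 / cnj d1 \<noteq> 0" using d1 d2 by simp
  have Dc: "D1 \<in> carrier_mat m m" by (simp add: D1_def)
  have one: "(1::complex) \<noteq> 0" by simp
  show ?thesis by (rule sv_unique[OF Dc Dsym unitary_one one eq1 W'u zn eq2 n1 n2])
qed

lemma adm_norm: "admissible_lambda (Suc m) k lam \<Longrightarrow> normalized m (\<lambda>i. lam ! i)"
  unfolding admissible_lambda_def normalized_def by auto

lemma adm_norm1: "admissible_lambda (Suc (Suc m)) 1 lam \<Longrightarrow> normalized m (\<lambda>i. lam ! i) \<and> lam ! m = 0"
  unfolding admissible_lambda_def normalized_def by auto

lemma uniq:
  fixes H :: "complex mat"
  assumes H: "H \<in> carrier_mat (Suc m) (Suc m)" and sym: "\<forall>i<Suc m. \<forall>j<Suc m. H$$(i,j) = H$$(j,i)"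
    and m: "0 < m"
    and k1: "k1 \<in> {1,2,3}" and al1: "admissible_lambda (Suc m) k1 lam1"
    and adm1: "admissible_params (Suc m) a1 V1 c1 d1" and eq1: "act (Suc m) a1 V1 c1 d1 H = normal_form (Suc m) k1 lam1"
    and k2: "k2 \<in> {1,2,3}" and al2: "admissible_lambda (Suc m) k2 lam2"
    and adm2: "admissible_params (Suc m) a2 V2 c2 d2" and eq2: "act (Suc m) a2 V2 c2 d2 H = normal_form (Suc m) k2 lam2"
  shows "k1 = k2 \<and> lam1 = lam2"
proof -
  note A1 = analysis[OF H sym m adm1 eq1 k1]
  note A2 = analysis[OF H sym m adm2 eq2 k2]
  have kk: "k1 = k2" using A1(3) A2(3) by simp
  have len: "length lam1 = m" "length lam2 = m" using al1 al2 by (auto simp: admissible_lambda_def)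
  have n1: "normalized m (\<lambda>i. lam1 ! i)" and n2: "normalized m (\<lambda>i. lam2 ! i)"
    using adm_norm[OF al1] adm_norm[OF al2] .
  have d1: "cnj d1 \<noteq> 0" and d2: "cnj d2 \<noteq> 0" using A1(2) A2(2) by auto
  have "\<forall>i<m. lam1 ! i = lam2 ! i"
  proof -
    consider "k1 = 3" | "k1 = 2" | "k1 = 1" using k1 by auto
    then show ?thesis
    proof cases
      case 1
      have D1: "cnj d1 \<cdot>\<^sub>m (of_real (sqrt a1) \<cdot>\<^sub>m V1 * Ap m H * transpose_mat (of_real (sqrt a1) \<cdot>\<^sub>m V1)) = dg m (\<lambda>i. lam1 ! i)"
        using A1(4)[OF 1] by simp
      have D2: "cnj d2 \<cdot>\<^sub>m (of_real (sqrt a2) \<cdot>\<^sub>m V2 * Ap m H * transpose_mat (of_real (sqrt a2) \<cdot>\<^sub>m V2)) = dg m (\<lambda>i. lam2 ! i)"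
        using A2(4) 1 kk by simp
      show ?thesis by (rule sv_unique[OF Ap_carrier Ap_sym[OF sym] A1(1) d1 D1 A2(1) d2 D2 n1 n2])
    next
      case 2
      have tsym: "\<forall>i<m. \<forall>j<m. tlm m H$$(i,j) = tlm m H$$(j,i)" using sym by simp
      have D1: "cnj d1 \<cdot>\<^sub>m (of_real (sqrt a1) \<cdot>\<^sub>m V1 * tlm m H * transpose_mat (of_real (sqrt a1) \<cdot>\<^sub>m V1)) = dg m (\<lambda>i. lam1 ! i)"
        using A1(5)[OF 2] by simp
      have D2: "cnj d2 \<cdot>\<^sub>m (of_real (sqrt a2) \<cdot>\<^sub>m V2 * tlm m H * transpose_mat (of_real (sqrt a2) \<cdot>\<^sub>m V2)) = dg m (\<lambda>i. lam2 ! i)"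
        using A2(5) 2 kk by simp
      show ?thesis by (rule sv_unique[OF tlm_carrier tsym A1(1) d1 D1 A2(1) d2 D2 n1 n2])
    next
      case 3
      obtain m' where mm: "m = Suc m'" using m by (cases m) auto
      have B1: "(\<forall>i<m'. qv m (of_real (sqrt a1) \<cdot>\<^sub>m V1) H i = 0) \<and> qv m (of_real (sqrt a1) \<cdot>\<^sub>m V1) H m' \<noteq> 0 \<and>
        (\<forall>i<m'. \<forall>j<m'. cnj d1 * (of_real (sqrt a1) \<cdot>\<^sub>m V1 * tlm m H * transpose_mat (of_real (sqrt a1) \<cdot>\<^sub>m V1)) $$ (i,j) = (if i = j then complex_of_real (lam1 ! i) else 0))"
        using A1(6)[OF 3] mm by simp
      have B2: "(\<forall>i<m'. qv m (of_real (sqrt a2) \<cdot>\<^sub>m V2) H i = 0) \<and> qv m (of_real (sqrt a2) \<cdot>\<^sub>m V2) H m' \<noteq> 0 \<and>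
        (\<forall>i<m'. \<forall>j<m'. cnj d2 * (of_real (sqrt a2) \<cdot>\<^sub>m V2 * tlm m H * transpose_mat (of_real (sqrt a2) \<cdot>\<^sub>m V2)) $$ (i,j) = (if i = j then complex_of_real (lam2 ! i) else 0))"
        using A2(6) 3 kk mm by simp
      have N1: "normalized m' (\<lambda>i. lam1 ! i) \<and> lam1 ! m' = 0" using adm_norm1[of m' lam1] al1 3 mm by simp
      have N2: "normalized m' (\<lambda>i. lam2 ! i) \<and> lam2 ! m' = 0" using adm_norm1[of m' lam2] al2 3 kk mm by simp
      have U1: "unitary_mat (Suc m') (of_real (sqrt a1) \<cdot>\<^sub>m V1)" using A1(1) mm by simp
      have U2: "unitary_mat (Suc m') (of_real (sqrt a2) \<cdot>\<^sub>m V2)" using A2(1) mm by simp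
      have B1': "(\<forall>i<m'. qv (Suc m') (of_real (sqrt a1) \<cdot>\<^sub>m V1) H i = 0)" "qv (Suc m') (of_real (sqrt a1) \<cdot>\<^sub>m V1) H m' \<noteq> 0"
        "(\<forall>i<m'. \<forall>j<m'. cnj d1 * (of_real (sqrt a1) \<cdot>\<^sub>m V1 * tlm (Suc m') H * transpose_mat (of_real (sqrt a1) \<cdot>\<^sub>m V1)) $$ (i,j) = (if i = j then complex_of_real (lam1 ! i) else 0))"
        using B1 mm by auto
      have B2': "(\<forall>i<m'. qv (Suc m') (of_real (sqrt a2) \<cdot>\<^sub>m V2) H i = 0)"
        "(\<forall>i<m'. \<forall>j<m'. cnj d2 * (of_real (sqrt a2) \<cdot>\<^sub>m V2 * tlm (Suc m') H * transpose_mat (of_real (sqrt a2) \<cdot>\<^sub>m V2)) $$ (i,j) = (if i = j then complex_of_real (lam2 ! i) else 0))"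
        using B2 mm by auto
      have "\<forall>i<m'. lam1 ! i = lam2 ! i"
        by (rule uniq1[OF U1 U2 A1(2) A2(2) B1'(1) B1'(2) B2'(1) B1'(3) B2'(2) conjunct1[OF N1] conjunct1[OF N2]])
      then show ?thesis using N1 N2 mm by (auto simp: less_Suc_eq)
    qed
  qed
  then have "lam1 = lam2" using len by (intro nth_equalityI) auto
  with kk show ?thesis by simp
qed

theorem theorem5p8:
  fixes n :: nat and H :: "complex mat"
  assumes "n \<ge> 2" and "H \<in> carrier_mat n n" and "transpose_mat H = H"
  shows "\<exists>!(k, lam). k \<in> {1, 2, 3} \<and> admissible_lambda n k lam \<and>
           (\<exists>a V c d. admissible_params n a V c d \<and> act n a V c d H = normal_form n k lam)"
proof -
  obtain m where nm: "n = Suc m" and m: "0 < m" using assms(1) by (cases n) auto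
  have H: "H \<in> carrier_mat (Suc m) (Suc m)" using assms(2) nm by simp
  have sym: "\<forall>i<Suc m. \<forall>j<Suc m. H$$(i,j) = H$$(j,i)"
  proof (intro allI impI)
    fix i j assume ij: "i < Suc m" "j < Suc m"
    have "transpose_mat H $$ (i,j) = H $$ (j,i)" using H ij by simp
    then show "H$$(i,j) = H$$(j,i)" using assms(3) by simp
  qed
  let ?P = "\<lambda>(k, lam). k \<in> {1, 2, 3::nat} \<and> admissible_lambda n k lam \<and>
           (\<exists>a V c d. admissible_params n a V c d \<and> act n a V c d H = normal_form n k lam)"
  have ex: "\<exists>p. ?P p"
  proof (cases "H$$(m,m) \<noteq> 0")
    case True
    then obtain lam where "admissible_lambda (Suc m) 3 lam \<and>
      (\<exists>a V c d. admissible_params (Suc m) a V c d \<and> act (Suc m) a V c d H = normal_form (Suc m) 3 lam)"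
      using exist3[OF H sym m] by blast
    then have "?P (3, lam)" using nm by simp
    then show ?thesis by blast
  next
    case False
    then have h0: "H$$(m,m) = 0" by simp
    show ?thesis
    proof (cases "\<exists>k0<m. H$$(k0,m) \<noteq> 0")
      case True
      then obtain k0 where "k0 < m" "H$$(k0,m) \<noteq> 0" by blast
      then obtain lam where "admissible_lambda (Suc m) 1 lam \<and>
        (\<exists>a V c d. admissible_params (Suc m) a V c d \<and> act (Suc m) a V c d H = normal_form (Suc m) 1 lam)"
        using exist1[OF H sym m h0] by blast
      then have "?P (1, lam)" using nm by simp
      then show ?thesis by blast
    next
      case False
      then have "\<forall>k<m. H$$(k,m) = 0" by blast
      then obtain lam where "admissible_lambda (Suc m) 2 lam \<and>
        (\<exists>a V c d. admissible_params (Suc m) a V c d \<and> act (Suc m) a V c d H = normal_form (Suc m) 2 lam)"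
        using exist2[OF H sym m h0] by blast
      then have "?P (2, lam)" using nm by simp
      then show ?thesis by blast
    qed
  qed
  have un: "p = q" if "?P p" "?P q" for p q
  proof -
    obtain k1 lam1 where p: "p = (k1, lam1)" by (cases p)
    obtain k2 lam2 where q: "q = (k2, lam2)" by (cases q)
    from that p q obtain a1 V1 c1 d1 a2 V2 c2 d2 where
      k1: "k1 \<in> {1,2,3}" and al1: "admissible_lambda (Suc m) k1 lam1"
      and adm1: "admissible_params (Suc m) a1 V1 c1 d1" and eq1: "act (Suc m) a1 V1 c1 d1 H = normal_form (Suc m) k1 lam1"
      and k2: "k2 \<in> {1,2,3}" and al2: "admissible_lambda (Suc m) k2 lam2"
      and adm2: "admissible_params (Suc m) a2 V2 c2 d2" and eq2: "act (Suc m) a2 V2 c2 d2 H = normal_form (Suc m) k2 lam2"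
      using nm by auto
    show ?thesis using uniq[OF H sym m k1 al1 adm1 eq1 k2 al2 adm2 eq2] p q by simp
  qed
  show ?thesis using ex un by (rule ex_ex1I)
qed

end
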